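(* Consider the saddle point problem and Algorithm PDS-SPP described in the context, with positive integers $T_k$, positive reals $\beta_k,p_k,q_k^t,\eta_k^t$ and nonnegative reals $\lambda_k,\tau_k,\alpha_k^t$ satisfying: (i) for every $k\ge2$: $\beta_k\tau_k\le\beta_{k-1}(\tau_{k-1}+1)$, $\beta_{k-1}=\beta_k\lambda_k$, $\tilde L\lambda_k\le p_{k-1}\tau_k$, $\beta_kT_{k-1}\alpha_k^1=\beta_{k-1}T_k$, $\alpha_k^1\|\mathcal A\|^2\le\eta_{k-1}^{T_{k-1}}q_k^1$, $\beta_kT_{k-1}q_k^1\le\beta_{k-1}T_kq_{k-1}^{T_{k-1}}$, $\beta_kT_{k-1}(\eta_k^1+p_kT_k)\le\beta_{k-1}T_k(\mu+\eta_{k-1}^{T_{k-1}}+p_{k-1})$; (ii) for every $k\ge1$, $t\ge2$: $\alpha_k^t=1$, $\|\mathcal A\|^2\le\eta_k^{t-1}q_k^t$, $q_k^t\le q_k^{t-1}$, $\eta_k^t\le\mu+\eta_k^{t-1}+p_k$; (iii) $\tau_1=0$, $p_N(\tau_N+1)\ge\tilde L$, $\eta_N^{T_N}q_N^{T_N}\ge\|\mathcal A\|^2$. Then for all $w=(x,y,z)\in\mathcal X\times\mathcal Y\times\mathcal Z$, $$Q(\overline w_N,w)\le\Big(\sum_{k=1}^N\beta_k\Big)^{-1}\beta_1\Big[\frac{q_1^1}{T_1}U(z_0,z)+\Big(\frac{\eta_1^1}{T_1}+p_1\Big)V(x_0,x)\Big].$$ Moreover, in the special case where $\mathcal Z$ is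 a whole vector space with Euclidean norm $|\cdot|=\|\cdot\|_2$, $U(\hat z,z)=\frac12\|z-\hat z\|_2^2$, $h(z)=\langle b,z\rangle$ (so the problem is $\min_{x\in\mathcal X}f(x)$ s.t. $\mathcal Ax=b$), and $z_0=0$, for any saddle point $(x^*,y^*,z^* )$ of the saddle point problem, $$f(\overline x_N)-f(x^* )\le\Big(\sum_{k=1}^N\beta_k\Big)^{-1}\beta_1\Big(\frac{\eta_1^1}{T_1}+p_1\Big)V(x_0,x^* ),$$ $$\|\mathcal A\overline x_N-b\|_2\le\Big(\sum_{k=1}^N\beta_k\Big)^{-1}\beta_1\Big[\frac{q_1^1}{2T_1}(\|z^*\|_2+1)^2+\Big(\frac{\eta_1^1}{T_1}+p_1\Big)V(x_0,x^* )\Big].$$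
   Context: Setting. $\mathcal X$ is a closed convex subset of a finite-dimensional space with norm $\|\cdot\|$ (dual norm $\|\cdot\|_*$); $\mathcal Z$ is a closed convex subset of a finite-dimensional space with norm $|\cdot|$; $\mathcal A$ is a linear operator with $\|\mathcal A\|:=\sup\{\langle\mathcal Ax,z\rangle:\|x\|\le1,|z|\le1\}$; $h:\mathcal Z\to\mathbb R$ convex. $f=\tilde f+\mu\nu$ with $\mu\ge0$, $\nu:\mathcal X\to\mathbb R$ $1$-strongly convex w.r.t. $\|\cdot\|$, $\tilde f$ convex differentiable with $\nabla\tilde f$ $\tilde L$-Lipschitz w.r.t. $\|\cdot\|$. $\tilde f^*$ is the convex conjugate of $\tilde f$ and $\mathcal Y=\mathrm{dom}\,\tilde f^*$. The problem is $\min_{x\in\mathcal X}\max_{y\in\mathcal Y,z\in\mathcal Z}\mu\nu(x)+\langle x,y+\mathcal A^\top z\rangle-\tilde f^*(y)-h(z)$ (equivalently $\min_x\max_z f(x)+\langle\mathcal Ax,z\rangle-h(z)$). $\zeta:\mathcal Z\to\mathbb R$ is $1$-strongly convex w.r.t. $|\cdot|$. Bregman functions (with subgradients $\zeta',\nu',(\tilde f^* )'$): $U(\hat z,z)=\zeta(z)-\zeta(\hat z)-\langle\zeta'(\hat z),z-\hat z\rangle$, $V(\hat x,x)=\nu(x)-\nu(\hat x)-\langle\nu'(\hat x),x-\hat x\rangle$, $W(v,y)=\tilde f^*(y)-\tilde f^*(v)-\langle(\tilde f^* )'(v),y-v\rangle$. Gap function: for $\bar w=(\bar x,\bar y,\bar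 z)$ and $w=(x,y,z)$, $Q(\bar w,w)=[\mu\nu(\bar x)+\langle\bar x,y+\mathcal A^\top z\rangle-\tilde f^*(y)-h(z)]-[\mu\nu(x)+\langle x,\bar y+\mathcal A^\top\bar z\rangle-\tilde f^*(\bar y)-h(\bar z)]$. Algorithm PDS-SPP: choose $x_0\in\mathcal X$, $y_0\in\mathcal Y$, $z_0\in\mathcal Z$, $\hat x_0=x_{-1}=x_0$. For $k=1,\dots,N$: $\tilde x_k=x_{k-1}+\lambda_k(\hat x_{k-1}-x_{k-2})$; $y_k=\arg\min_{y\in\mathcal Y}\langle-\tilde x_k,y\rangle+\tilde f^*(y)+\tau_kW(y_{k-1},y)$; $x_k^0=x_{k-1}$, $z_k^0=z_{k-1}$, $x_k^{-1}=x_{k-1}^{T_{k-1}-1}$ ($x_1^{-1}=x_0$); for $t=1,\dots,T_k$: $\tilde u_k^t=x_k^{t-1}+\alpha_k^t(x_k^{t-1}-x_k^{t-2})$, $z_k^t=\arg\min_{z\in\mathcal Z}h(z)+\langle-\mathcal A\tilde u_k^t,z\rangle+q_k^tU(z_k^{t-1},z)$, $x_k^t=\arg\min_{x\in\mathcal X}\mu\nu(x)+\langle y_k+\mathcal A^\top z_k^t,x\rangle+\eta_k^tV(x_k^{t-1},x)+p_kV(x_{k-1},x)$; $x_k=x_k^{T_k}$, $z_k=z_k^{T_k}$, $\hat x_k=\frac1{T_k}\sum_tx_k^t$, $\hat z_k=\frac1{T_k}\sum_tz_k^t$. Output $\overline w_N=(\overline x_N,\overline y_N,\overline z_N)=(\sum_k\beta_k)^{-1}\sum_k\beta_k(\hat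 x_k,y_k,\hat z_k)$. *)

theory Defs
  imports "HOL-Analysis.Analysis"
begin

definition is_norm :: "('a::real_vector \<Rightarrow> real) \<Rightarrow> bool" where
  "is_norm n \<longleftrightarrow> (\<forall>x. 0 \<le> n x) \<and> (\<forall>x. n x = 0 \<longleftrightarrow> x = 0)
     \<and> (\<forall>c x. n (c *\<^sub>R x) = \<bar>c\<bar> * n x) \<and> (\<forall>x y. n (x + y) \<le> n x + n y)"

text \<open>Dual norm (the dual space is identified with the space itself via the inner product).\<close>
definition dual_norm :: "('a::real_inner \<Rightarrow> real) \<Rightarrow> 'a \<Rightarrow> real" where
  "dual_norm n y = Sup {inner x y | x. n x \<le> 1}"

definition op_norm :: "('a::real_inner \<Rightarrow> real) \<Rightarrow> ('b::real_inner \<Rightarrow> real) \<Rightarrow> ('a \<Rightarrow> 'b) \<Rightarrow> real" where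
  "op_norm nx nz A = Sup {inner (A x) z | x z. nx x \<le> 1 \<and> nz z \<le> 1}"

definition strongly_convex_wrt :: "real \<Rightarrow> ('a::real_vector \<Rightarrow> real) \<Rightarrow> 'a set \<Rightarrow> ('a \<Rightarrow> real) \<Rightarrow> bool" where
  "strongly_convex_wrt m n S g \<longleftrightarrow> (\<forall>x\<in>S. \<forall>y\<in>S. \<forall>\<theta>::real. 0 \<le> \<theta> \<and> \<theta> \<le> 1 \<longrightarrow>
      g (\<theta> *\<^sub>R x + (1 - \<theta>) *\<^sub>R y) \<le> \<theta> * g x + (1 - \<theta>) * g y - m / 2 * \<theta> * (1 - \<theta>) * (n (x - y))\<^sup>2)"

definition is_subgrad_on :: "('a::real_inner \<Rightarrow> real) \<Rightarrow> 'a set \<Rightarrow> 'a \<Rightarrow> 'a \<Rightarrow> bool" where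
  "is_subgrad_on g S x s \<longleftrightarrow> x \<in> S \<and> (\<forall>u\<in>S. g x + inner s (u - x) \<le> g u)"

definition conj_ext :: "('a::real_inner \<Rightarrow> real) \<Rightarrow> 'a \<Rightarrow> ereal" where
  "conj_ext f y = (SUP x. ereal (inner x y - f x))"

definition conj_dom :: "('a::real_inner \<Rightarrow> real) \<Rightarrow> 'a set" where
  "conj_dom f = {y. conj_ext f y < \<infinity>}"

definition conj :: "('a::real_inner \<Rightarrow> real) \<Rightarrow> 'a \<Rightarrow> real" where
  "conj f y = real_of_ereal (conj_ext f y)"

definition breg :: "('a::real_inner \<Rightarrow> real) \<Rightarrow> ('a \<Rightarrow> 'a) \<Rightarrow> 'a \<Rightarrow> 'a \<Rightarrow> real" where
  "breg g g' a b = g b - g a - inner (g' a) (b - a)"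

definition is_argmin_on :: "'a set \<Rightarrow> ('a \<Rightarrow> real) \<Rightarrow> 'a \<Rightarrow> bool" where
  "is_argmin_on S F v \<longleftrightarrow> v \<in> S \<and> (\<forall>u\<in>S. F v \<le> F u)"

definition Lag :: "('a::real_inner \<Rightarrow> 'b::real_inner) \<Rightarrow> real \<Rightarrow> ('a \<Rightarrow> real) \<Rightarrow> ('a \<Rightarrow> real)
     \<Rightarrow> ('b \<Rightarrow> real) \<Rightarrow> 'a \<Rightarrow> 'a \<Rightarrow> 'b \<Rightarrow> real" where
  "Lag A mu nu ft h x y z = mu * nu x + inner x y + inner (A x) z - conj ft y - h z"

definition gapQ :: "('a::real_inner \<Rightarrow> 'b::real_inner) \<Rightarrow> real \<Rightarrow> ('a \<Rightarrow> real) \<Rightarrow> ('a \<Rightarrow> real)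
     \<Rightarrow> ('b \<Rightarrow> real) \<Rightarrow> 'a \<Rightarrow> 'a \<Rightarrow> 'b \<Rightarrow> 'a \<Rightarrow> 'a \<Rightarrow> 'b \<Rightarrow> real" where
  "gapQ A mu nu ft h xb yb zb x y z = Lag A mu nu ft h xb y z - Lag A mu nu ft h x yb zb"

definition xhat :: "(nat \<Rightarrow> nat) \<Rightarrow> (nat \<Rightarrow> 'a::real_vector) \<Rightarrow> (nat \<Rightarrow> nat \<Rightarrow> 'a) \<Rightarrow> nat \<Rightarrow> 'a" where
  "xhat T x xin k = (if k = 0 then x 0 else (1 / real (T k)) *\<^sub>R (\<Sum>t=1..T k. xin k t))"

definition zhat :: "(nat \<Rightarrow> nat) \<Rightarrow> (nat \<Rightarrow> nat \<Rightarrow> 'b::real_vector) \<Rightarrow> nat \<Rightarrow> 'b" where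
  "zhat T zin k = (1 / real (T k)) *\<^sub>R (\<Sum>t=1..T k. zin k t)"

definition wavg :: "(nat \<Rightarrow> real) \<Rightarrow> nat \<Rightarrow> (nat \<Rightarrow> 'a::real_vector) \<Rightarrow> 'a" where
  "wavg beta N v = (1 / (\<Sum>k=1..N. beta k)) *\<^sub>R (\<Sum>k=1..N. beta k *\<^sub>R v k)"

text \<open>tilde x_k = x_{k-1} + lambda_k (hat x_{k-1} - x_{k-2}), with x_{-1} = x_0
  (natural-number subtraction gives x (1 - 2) = x 0).\<close>
definition xtil :: "(nat \<Rightarrow> nat) \<Rightarrow> (nat \<Rightarrow> real) \<Rightarrow> (nat \<Rightarrow> 'a::real_vector) \<Rightarrow> (nat \<Rightarrow> nat \<Rightarrow> 'a) \<Rightarrow> nat \<Rightarrow> 'a" where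
  "xtil T lam x xin k = x (k - 1) + lam k *\<^sub>R (xhat T x xin (k - 1) - x (k - 2))"

text \<open>tilde u_k^t = x_k^{t-1} + alpha_k^t (x_k^{t-1} - x_k^{t-2}) with
  x_k^{-1} = x_{k-1}^{T_{k-1}-1} and x_1^{-1} = x_0.\<close>
definition util :: "(nat \<Rightarrow> nat) \<Rightarrow> (nat \<Rightarrow> nat \<Rightarrow> real) \<Rightarrow> (nat \<Rightarrow> 'a::real_vector) \<Rightarrow> (nat \<Rightarrow> nat \<Rightarrow> 'a) \<Rightarrow> nat \<Rightarrow> nat \<Rightarrow> 'a" where
  "util T alpha x xin k t =
     (let prev2 = (if t = 1 then (if k = 1 then x 0 else xin (k - 1) (T (k - 1) - 1)) else xin k (t - 2))
      in xin k (t - 1) + alpha k t *\<^sub>R (xin k (t - 1) - prev2))"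

definition pds_spp ::
  "'a set \<Rightarrow> 'b set \<Rightarrow> ('a::euclidean_space \<Rightarrow> 'b::euclidean_space) \<Rightarrow> real \<Rightarrow> ('a \<Rightarrow> real) \<Rightarrow> ('a \<Rightarrow> 'a)
   \<Rightarrow> ('a \<Rightarrow> real) \<Rightarrow> ('a \<Rightarrow> 'a) \<Rightarrow> ('b \<Rightarrow> real) \<Rightarrow> ('b \<Rightarrow> real) \<Rightarrow> ('b \<Rightarrow> 'b)
   \<Rightarrow> (nat \<Rightarrow> nat) \<Rightarrow> (nat \<Rightarrow> real) \<Rightarrow> (nat \<Rightarrow> real) \<Rightarrow> (nat \<Rightarrow> nat \<Rightarrow> real) \<Rightarrow> (nat \<Rightarrow> nat \<Rightarrow> real)
   \<Rightarrow> (nat \<Rightarrow> nat \<Rightarrow> real) \<Rightarrow> (nat \<Rightarrow> real) \<Rightarrow> nat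
   \<Rightarrow> (nat \<Rightarrow> 'a) \<Rightarrow> (nat \<Rightarrow> 'a) \<Rightarrow> (nat \<Rightarrow> 'b) \<Rightarrow> (nat \<Rightarrow> nat \<Rightarrow> 'a) \<Rightarrow> (nat \<Rightarrow> nat \<Rightarrow> 'b) \<Rightarrow> bool" where
  "pds_spp X Z A mu nu nu' ft fs' h zeta zeta' T lam tau alpha q eta p N x y z xin zin \<longleftrightarrow>
     (\<forall>k\<in>{1..N}.
        is_argmin_on (conj_dom ft)
          (\<lambda>v. inner (- xtil T lam x xin k) v + conj ft v + tau k * breg (conj ft) fs' (y (k - 1)) v) (y k)
      \<and> xin k 0 = x (k - 1) \<and> zin k 0 = z (k - 1)
      \<and> (\<forall>t\<in>{1..T k}.
           is_argmin_on Z
             (\<lambda>v. h v + inner (- A (util T alpha x xin k t)) v + q k t * breg zeta zeta' (zin k (t - 1)) v) (zin k t)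
         \<and> is_argmin_on X
             (\<lambda>v. mu * nu v + inner (y k) v + inner (A v) (zin k t)
                  + eta k t * breg nu nu' (xin k (t - 1)) v + p k * breg nu nu' (x (k - 1)) v) (xin k t))
      \<and> x k = xin k (T k) \<and> z k = zin k (T k))"

text \<open>Convention on the subgradient selections used in the Bregman distances: they are
  subgradients at every point where they are used, and at a point produced by a prox step
  the selected subgradient is the one certifying the optimality of that step
  (the usual convention making the prox steps well-behaved for nonsmooth prox-functions).\<close>
definition pds_subgrad_convention ::
  "'a set \<Rightarrow> 'b set \<Rightarrow> ('a::euclidean_space \<Rightarrow> 'b::euclidean_space) \<Rightarrow> real \<Rightarrow> ('a \<Rightarrow> real) \<Rightarrow> ('a \<Rightarrow> 'a)
   \<Rightarrow> ('a \<Rightarrow> real) \<Rightarrow> ('a \<Rightarrow> 'a) \<Rightarrow> ('b \<Rightarrow> real) \<Rightarrow> ('b \<Rightarrow> real) \<Rightarrow> ('b \<Rightarrow> 'b)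
   \<Rightarrow> (nat \<Rightarrow> nat) \<Rightarrow> (nat \<Rightarrow> real) \<Rightarrow> (nat \<Rightarrow> real) \<Rightarrow> (nat \<Rightarrow> nat \<Rightarrow> real) \<Rightarrow> (nat \<Rightarrow> nat \<Rightarrow> real)
   \<Rightarrow> (nat \<Rightarrow> nat \<Rightarrow> real) \<Rightarrow> (nat \<Rightarrow> real) \<Rightarrow> nat
   \<Rightarrow> (nat \<Rightarrow> 'a) \<Rightarrow> (nat \<Rightarrow> 'a) \<Rightarrow> (nat \<Rightarrow> 'b) \<Rightarrow> (nat \<Rightarrow> nat \<Rightarrow> 'a) \<Rightarrow> (nat \<Rightarrow> nat \<Rightarrow> 'b) \<Rightarrow> bool" where
  "pds_subgrad_convention X Z A mu nu nu' ft fs' h zeta zeta' T lam tau alpha q eta p N x y z xin zin \<longleftrightarrow>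
     is_subgrad_on nu X (x 0) (nu' (x 0))
   \<and> is_subgrad_on (conj ft) (conj_dom ft) (y 0) (fs' (y 0))
   \<and> is_subgrad_on zeta Z (z 0) (zeta' (z 0))
   \<and> (\<forall>k\<in>{1..N}.
        is_subgrad_on (conj ft) (conj_dom ft) (y k) (fs' (y k))
      \<and> is_argmin_on (conj_dom ft)
          (\<lambda>v. inner (- xtil T lam x xin k + (1 + tau k) *\<^sub>R fs' (y k) - tau k *\<^sub>R fs' (y (k - 1))) v) (y k)
      \<and> (\<forall>t\<in>{1..T k}.
           is_subgrad_on zeta Z (zin k t) (zeta' (zin k t))
         \<and> is_argmin_on Z
             (\<lambda>v. h v + inner (- A (util T alpha x xin k t) + q k t *\<^sub>R (zeta' (zin k t) - zeta' (zin k (t - 1)))) v)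
             (zin k t)
         \<and> is_subgrad_on nu X (xin k t) (nu' (xin k t))
         \<and> is_argmin_on X
             (\<lambda>v. inner ((mu + eta k t + p k) *\<^sub>R nu' (xin k t) + y k
                          - eta k t *\<^sub>R nu' (xin k (t - 1)) - p k *\<^sub>R nu' (x (k - 1))) v
                  + inner (A v) (zin k t))
             (xin k t)))"

end

theory Submission
  imports Defs
begin

lemma isn_scale: "is_norm n \<Longrightarrow> n (c *\<^sub>R x) = \<bar>c\<bar> * n x" by (simp add: is_norm_def)
lemma isn_nonneg: "is_norm n \<Longrightarrow> 0 \<le> n x" by (simp add: is_norm_def)
lemma isn_zero: "is_norm n \<Longrightarrow> n x = 0 \<longleftrightarrow> x = 0" by (simp add: is_norm_def)
lemma isn_tri: "is_norm n \<Longrightarrow> n (x + y) \<le> n x + n y" by (simp add: is_norm_def)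
lemma isn_minus: "is_norm n \<Longrightarrow> n (- x) = n x"
  using isn_scale[of n "-1" x] by simp
lemma isn_sym: "is_norm n \<Longrightarrow> n (x - y) = n (y - x)"
  using isn_minus[of n "x - y"] by simp

lemma isn_sum: assumes nrm: "is_norm n" and S: "finite S" shows "n (\<Sum>i\<in>S. f i) \<le> (\<Sum>i\<in>S. n (f i))"
  using S
proof (induction S rule: finite_induct)
  case empty have "n 0 = 0" using nrm by (simp add: is_norm_def)
  then show ?case by simp
next
  case (insert a S)
  then show ?case using isn_tri[OF nrm, of "f a" "sum f S"] by simp
qed

lemma isn_upper:
  fixes n :: "'a::euclidean_space \<Rightarrow> real"
  assumes "is_norm n"
  shows "n x \<le> (\<Sum>i\<in>Basis. n i) * norm x"
proof -
  have "n x = n (\<Sum>i\<in>Basis. (x \<bullet> i) *\<^sub>R i)" by (simp add: euclidean_representation)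
  also have "\<dots> \<le> (\<Sum>i\<in>Basis. n ((x \<bullet> i) *\<^sub>R i))" by (rule isn_sum[OF assms]) simp
  also have "\<dots> = (\<Sum>i\<in>Basis. \<bar>x \<bullet> i\<bar> * n i)" using isn_scale[OF assms] by simp
  also have "\<dots> \<le> (\<Sum>i\<in>Basis. norm x * n i)"
    by (intro sum_mono mult_right_mono Basis_le_norm isn_nonneg[OF assms]) auto
  finally show ?thesis by (simp add: sum_distrib_left mult.commute)
qed

lemma isn_lower:
  fixes n :: "'a::euclidean_space \<Rightarrow> real"
  assumes n: "is_norm n"
  shows "\<exists>c>0. \<forall>x. c * norm x \<le> n x"
proof -
  define C where "C = (\<Sum>i\<in>Basis. n i)"
  have lip: "dist (n x) (n y) \<le> C * dist x y" for x y
  proof -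
    have "n x \<le> n y + n (x - y)" using isn_tri[OF n, of y "x - y"] by simp
    moreover have "n y \<le> n x + n (y - x)" using isn_tri[OF n, of x "y - x"] by simp
    moreover have "n (x - y) \<le> C * norm (x - y)" using isn_upper[OF n] C_def by simp
    moreover have "n (y - x) = n (x - y)" using isn_sym[OF n] by simp
    ultimately show ?thesis by (simp add: dist_real_def dist_norm abs_le_iff)
  qed
  have "continuous_on UNIV n"
  proof (rule continuous_onI)
    fix x and e :: real assume "0 < e"
    show "\<exists>d>0. \<forall>x'\<in>UNIV. dist x' x < d \<longrightarrow> dist (n x') (n x) \<le> e"
    proof (intro exI[of _ "e / (C + 1)"] conjI ballI impI)
      have "C \<ge> 0" unfolding C_def by (intro sum_nonneg isn_nonneg[OF n])
      then show "0 < e / (C + 1)" using \<open>0 < e\<close> by simp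
      fix x' assume "dist x' x < e / (C + 1)"
      then have "C * dist x' x \<le> (C + 1) * (e / (C + 1))" using \<open>C \<ge> 0\<close>
        by (intro mult_mono) auto
      then show "dist (n x') (n x) \<le> e" using lip[of x' x] \<open>C \<ge> 0\<close> by simp
    qed
  qed
  then have cont: "continuous_on (sphere 0 1) n" by (rule continuous_on_subset) simp
  have ne: "sphere (0::'a) 1 \<noteq> {}" by simp
  obtain x0 where x0: "x0 \<in> sphere 0 1" "\<And>y. y \<in> sphere 0 1 \<Longrightarrow> n x0 \<le> n y"
    using continuous_attains_inf[OF compact_sphere ne cont] by blast
  have "x0 \<noteq> 0" using x0(1) by auto
  then have c: "n x0 > 0" using isn_zero[OF n, of x0] isn_nonneg[OF n, of x0] by simp
  show ?thesis
  proof (intro exI[of _ "n x0"] conjI allI c)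
    fix x
    show "n x0 * norm x \<le> n x"
    proof (cases "x = 0")
      case True then show ?thesis using isn_zero[OF n, of 0] by simp
    next
      case False
      then have "(1 / norm x) *\<^sub>R x \<in> sphere 0 1" by simp
      then have "n x0 \<le> n ((1 / norm x) *\<^sub>R x)" by (rule x0(2))
      also have "\<dots> = n x / norm x" using isn_scale[OF n] by simp
      finally show ?thesis using False by (simp add: field_simps)
    qed
  qed
qed

lemma dual_cs:
  fixes n :: "'a::euclidean_space \<Rightarrow> real"
  assumes n: "is_norm n"
  shows "inner x y \<le> dual_norm n y * n x" and "0 \<le> dual_norm n y"
proof -
  obtain c where c: "c > 0" "\<And>x. c * norm x \<le> n x" using isn_lower[OF n] by blast
  define S where "S = {inner x y | x. n x \<le> 1}"
  have bdd: "bdd_above S"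
  proof (rule bdd_aboveI)
    fix r assume "r \<in> S"
    then obtain u where u: "r = inner u y" "n u \<le> 1" unfolding S_def by blast
    have "norm u \<le> 1 / c" using c(2)[of u] u(2) c(1) by (simp add: field_simps)
    then have "inner u y \<le> (1/c) * norm y"
      using norm_cauchy_schwarz[of u y] by (meson mult_right_mono norm_ge_zero order_trans)
    then show "r \<le> (1/c) * norm y" using u by simp
  qed
  have mem: "inner u y \<in> S" if "n u \<le> 1" for u using that unfolding S_def by blast
  have dn: "dual_norm n y = Sup S" unfolding S_def dual_norm_def by simp
  show "0 \<le> dual_norm n y"
    using cSup_upper[OF mem[of 0] bdd] isn_zero[OF n, of 0] dn by simp
  show "inner x y \<le> dual_norm n y * n x"
  proof (cases "n x = 0")
    case True
    then have "x = 0" using isn_zero[OF n] by blast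
    then show ?thesis using True by simp
  next
    case False
    then have pos: "n x > 0" using isn_nonneg[OF n, of x] by simp
    have "n ((1 / n x) *\<^sub>R x) = 1" using isn_scale[OF n] pos by simp
    then have "inner ((1 / n x) *\<^sub>R x) y \<le> Sup S" by (intro cSup_upper[OF mem bdd]) simp
    moreover have "inner ((1 / n x) *\<^sub>R x) y = inner x y / n x" by simp
    ultimately have "inner x y / n x \<le> dual_norm n y" using dn by simp
    then show ?thesis using pos by (simp add: field_simps)
  qed
qed

lemma op_cs:
  fixes nx :: "'a::euclidean_space \<Rightarrow> real" and nz :: "'b::euclidean_space \<Rightarrow> real"
  assumes nx: "is_norm nx" and nz: "is_norm nz" and A: "linear A"
  shows "inner (A x) z \<le> op_norm nx nz A * nx x * nz z" and "0 \<le> op_norm nx nz A"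
proof -
  obtain c where c: "c > 0" "\<And>x. c * norm x \<le> nx x" using isn_lower[OF nx] by blast
  obtain d where d: "d > 0" "\<And>x. d * norm x \<le> nz x" using isn_lower[OF nz] by blast
  have "bounded_linear A" using A by (simp add: linear_conv_bounded_linear)
  then obtain B where B: "\<And>x. norm (A x) \<le> norm x * B" "B > 0"
    using bounded_linear.pos_bounded by blast
  define S where "S = {inner (A u) v | u v. nx u \<le> 1 \<and> nz v \<le> 1}"
  have bdd: "bdd_above S"
  proof (rule bdd_aboveI)
    fix r assume "r \<in> S"
    then obtain u v where u: "r = inner (A u) v" "nx u \<le> 1" "nz v \<le> 1" unfolding S_def by blast
    have nu: "norm u \<le> 1 / c" using c(2)[of u] u(2) c(1) by (simp add: field_simps)
    have nv: "norm v \<le> 1 / d" using d(2)[of v] u(3) d(1) by (simp add: field_simps)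
    have "inner (A u) v \<le> norm (A u) * norm v" by (rule norm_cauchy_schwarz)
    also have "\<dots> \<le> (norm u * B) * norm v" by (intro mult_right_mono B) auto
    also have "\<dots> \<le> ((1/c) * B) * (1/d)"
      using nu nv B(2) c(1) d(1) by (intro mult_mono) auto
    finally show "r \<le> ((1/c) * B) * (1/d)" using u by simp
  qed
  have mem: "inner (A u) v \<in> S" if "nx u \<le> 1" "nz v \<le> 1" for u v using that unfolding S_def by blast
  have dn: "op_norm nx nz A = Sup S" unfolding S_def op_norm_def by simp
  show "0 \<le> op_norm nx nz A"
    using cSup_upper[OF mem[of 0 0] bdd] isn_zero[OF nx, of 0] isn_zero[OF nz, of 0] dn
      linear_0[OF A] by simp
  show "inner (A x) z \<le> op_norm nx nz A * nx x * nz z"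
  proof (cases "nx x = 0 \<or> nz z = 0")
    case True
    then have "x = 0 \<or> z = 0" using isn_zero[OF nx] isn_zero[OF nz] by blast
    then have "inner (A x) z = 0" using linear_0[OF A] by auto
    moreover have "nx x * nz z = 0" using True by auto
    ultimately show ?thesis by (metis mult.assoc mult_zero_right order_refl)
  next
    case False
    then have pos: "nx x > 0" "nz z > 0" using isn_nonneg[OF nx, of x] isn_nonneg[OF nz, of z] by auto
    have "nx ((1 / nx x) *\<^sub>R x) = 1" "nz ((1 / nz z) *\<^sub>R z) = 1"
      using isn_scale[OF nx] isn_scale[OF nz] pos by auto
    then have "inner (A ((1 / nx x) *\<^sub>R x)) ((1 / nz z) *\<^sub>R z) \<le> Sup S"
      by (intro cSup_upper[OF mem bdd]) auto
    moreover have "inner (A ((1 / nx x) *\<^sub>R x)) ((1 / nz z) *\<^sub>R z) = inner (A x) z / (nx x * nz z)"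
      using linear_cmul[OF A] by simp
    ultimately have "inner (A x) z / (nx x * nz z) \<le> op_norm nx nz A" using dn
      by simp
    then show ?thesis using pos by (simp add: field_simps)
  qed
qed

lemma breg_sc_lower:
  assumes nrm: "is_norm n" and cx: "convex X" and sc: "strongly_convex_wrt 1 n X g"
    and sg: "is_subgrad_on g X a s" and b: "b \<in> X"
  shows "(n (b - a))\<^sup>2 / 2 \<le> g b - g a - inner s (b - a)"
proof (rule ccontr)
  assume H: "\<not> ?thesis"
  define K where "K = g b - g a - inner s (b - a) - (n (b - a))\<^sup>2 / 2"
  have K: "K < 0" using H K_def by simp
  have a: "a \<in> X" using sg by (simp add: is_subgrad_on_def)
  define M where "M = (n (b - a))\<^sup>2"
  have M0: "M \<ge> 0" unfolding M_def by simp
  define th where "th = min 1 (- K / (M + 1))"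
  have "0 < - K / (M + 1)" using K M0 by (intro divide_pos_pos) auto
  then have th: "0 < th" "th \<le> 1" unfolding th_def by auto
  have "th * M \<le> (- K / (M + 1)) * M" unfolding th_def using M0 by (intro mult_right_mono) auto
  also have "\<dots> < - K" using K M0 by (simp add: field_simps)
  finally have thM: "th * M < - K" .
  have pt: "th *\<^sub>R b + (1 - th) *\<^sub>R a \<in> X" using cx a b th by (simp add: convex_def)
  have sc1: "g (th *\<^sub>R b + (1 - th) *\<^sub>R a) \<le> th * g b + (1 - th) * g a - 1 / 2 * th * (1 - th) * M"
    using sc a b th unfolding strongly_convex_wrt_def M_def by auto
  have sg1: "g a + inner s ((th *\<^sub>R b + (1 - th) *\<^sub>R a) - a) \<le> g (th *\<^sub>R b + (1 - th) *\<^sub>R a)"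
    using sg pt unfolding is_subgrad_on_def by blast
  have "(th *\<^sub>R b + (1 - th) *\<^sub>R a) - a = th *\<^sub>R (b - a)" by (simp add: algebra_simps)
  then have "th * inner s (b - a) \<le> th * (g b - g a) - 1 / 2 * th * (1 - th) * M"
    using sc1 sg1 by (simp add: algebra_simps)
  then have "th * (inner s (b - a)) \<le> th * (g b - g a - 1 / 2 * (1 - th) * M)"
    by (simp add: algebra_simps)
  then have "inner s (b - a) \<le> g b - g a - 1 / 2 * (1 - th) * M"
    using th(1) by simp
  moreover have "K = g b - g a - inner s (b - a) - M / 2" using K_def M_def by simp
  moreover have "1 / 2 * (1 - th) * M = M / 2 - th * M / 2" by (simp add: field_simps)
  ultimately have "K \<ge> - th * M / 2" by linarith
  then show False using thM th M0 mult_nonneg_nonneg[of th M] by linarith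
qed

lemma line_deriv:
  assumes ft_grad: "\<And>u. (ft has_derivative (\<lambda>d. inner (gft u) d)) (at u)"
  shows "((\<lambda>t. ft (u + t *\<^sub>R d)) has_field_derivative inner (gft (u + t *\<^sub>R d)) d) (at t)"
proof -
  have "((\<lambda>t. u + t *\<^sub>R d) has_derivative (\<lambda>h. h *\<^sub>R d)) (at t)"
    by (auto intro!: derivative_eq_intros)
  then have "((\<lambda>t. ft (u + t *\<^sub>R d)) has_derivative (\<lambda>h. inner (gft (u + t *\<^sub>R d)) (h *\<^sub>R d))) (at t)"
    by (rule has_derivative_compose[OF _ ft_grad])
  moreover have "(\<lambda>h. inner (gft (u + t *\<^sub>R d)) (h *\<^sub>R d)) = (*) (inner (gft (u + t *\<^sub>R d)) d)"
    by (auto simp: fun_eq_iff)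
  ultimately show ?thesis unfolding has_field_derivative_def by simp
qed

lemma grad_ineq:
  assumes cvx: "convex_on UNIV ft"
    and ft_grad: "\<And>u. (ft has_derivative (\<lambda>d. inner (gft u) d)) (at u)"
  shows "ft u + inner (gft u) (v - u) \<le> ft v"
proof -
  define d where "d = v - u"
  define phi where "phi = (\<lambda>t::real. ft (u + t *\<^sub>R d))"
  have cphi: "convex_on UNIV phi"
  proof (rule convex_onI)
    fix t x y :: real assume "0 < t" "t < 1"
    have "u + ((1 - t) *\<^sub>R x + t *\<^sub>R y) *\<^sub>R d = (1 - t) *\<^sub>R (u + x *\<^sub>R d) + t *\<^sub>R (u + y *\<^sub>R d)"
      by (simp add: algebra_simps)
    then show "phi ((1 - t) *\<^sub>R x + t *\<^sub>R y) \<le> (1 - t) * phi x + t * phi y"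
      unfolding phi_def using convex_onD[OF cvx, of t "u + x *\<^sub>R d" "u + y *\<^sub>R d"] \<open>0 < t\<close> \<open>t < 1\<close>
      by simp
  qed simp
  have der: "(phi has_field_derivative inner (gft u) d) (at 0 within UNIV)"
    using line_deriv[OF ft_grad, of u d 0] unfolding phi_def by simp
  have "phi 1 - phi 0 \<ge> inner (gft u) d * (1 - 0)"
    by (rule convex_on_imp_above_tangent[OF cphi]) (use der in auto)
  then show ?thesis unfolding phi_def d_def by simp
qed

lemma descent:
  fixes nx :: "'a::euclidean_space \<Rightarrow> real"
  assumes nrm: "is_norm nx"
    and ft_grad: "\<And>u. (ft has_derivative (\<lambda>d. inner (gft u) d)) (at u)"
    and ft_lip: "\<And>u v. dual_norm nx (gft u - gft v) \<le> L * nx (u - v)"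
  shows "ft (u + d) \<le> ft u + inner (gft u) d + L / 2 * (nx d)\<^sup>2"
proof -
  define g where "g = (\<lambda>t::real. ft (u + t *\<^sub>R d) - t * inner (gft u) d - L / 2 * t\<^sup>2 * (nx d)\<^sup>2)"
  have "g 0 \<ge> g 1"
  proof (rule DERIV_nonpos_imp_nonincreasing[of 0 1 g])
    fix t :: real assume t: "0 \<le> t" "t \<le> 1"
    have D: "(g has_field_derivative (inner (gft (u + t *\<^sub>R d)) d - inner (gft u) d - L * t * (nx d)\<^sup>2)) (at t)"
      unfolding g_def
      by (rule derivative_eq_intros line_deriv[OF ft_grad] | simp)+
    have "inner (gft (u + t *\<^sub>R d)) d - inner (gft u) d = inner d (gft (u + t *\<^sub>R d) - gft u)"
      by (simp add: inner_diff_right inner_commute)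
    also have "\<dots> \<le> dual_norm nx (gft (u + t *\<^sub>R d) - gft u) * nx d" by (rule dual_cs(1)[OF nrm])
    also have "\<dots> \<le> (L * nx (t *\<^sub>R d)) * nx d"
      using ft_lip[of "u + t *\<^sub>R d" u] isn_nonneg[OF nrm, of d] by (intro mult_right_mono) auto
    also have "\<dots> = L * t * (nx d)\<^sup>2" using isn_scale[OF nrm, of t d] t by (simp add: power2_eq_square)
    finally have "inner (gft (u + t *\<^sub>R d)) d - inner (gft u) d - L * t * (nx d)\<^sup>2 \<le> 0" by simp
    then show "\<exists>y. (g has_field_derivative y) (at t) \<and> y \<le> 0" using D by blast
  qed simp
  then show ?thesis unfolding g_def by simp
qed

lemma conj_le:
  assumes "y \<in> conj_dom ft" shows "inner x y - ft x \<le> conj ft y"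
proof -
  have lt: "conj_ext ft y < \<infinity>" using assms by (simp add: conj_dom_def)
  have le: "ereal (inner x y - ft x) \<le> conj_ext ft y" unfolding conj_ext_def by (rule SUP_upper) simp
  then have "conj_ext ft y \<noteq> - \<infinity>" by auto
  then obtain r where r: "conj_ext ft y = ereal r" using lt by (cases "conj_ext ft y") auto
  then show ?thesis using le by (simp add: conj_def)
qed

lemma conj_ub:
  assumes "\<And>x. inner x y - ft x \<le> M" shows "y \<in> conj_dom ft" "conj ft y \<le> M"
proof -
  have le: "conj_ext ft y \<le> ereal M" unfolding conj_ext_def by (rule SUP_least) (use assms in simp)
  then show "y \<in> conj_dom ft" by (auto simp: conj_dom_def)
  have le2: "ereal (inner 0 y - ft 0) \<le> conj_ext ft y" unfolding conj_ext_def by (rule SUP_upper) simp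
  then obtain r where r: "conj_ext ft y = ereal r" using le by (cases "conj_ext ft y") auto
  then show "conj ft y \<le> M" using le by (simp add: conj_def)
qed

lemma conj_grad:
  assumes cvx: "convex_on UNIV ft"
    and ft_grad: "\<And>u. (ft has_derivative (\<lambda>d. inner (gft u) d)) (at u)"
  shows "gft u \<in> conj_dom ft" "conj ft (gft u) = inner u (gft u) - ft u"
proof -
  have b: "inner x (gft u) - ft x \<le> inner u (gft u) - ft u" for x
    using grad_ineq[OF cvx ft_grad, of u x] by (simp add: inner_diff_right inner_commute)
  show dom: "gft u \<in> conj_dom ft" by (rule conj_ub(1)[OF b])
  show "conj ft (gft u) = inner u (gft u) - ft u"
    using conj_ub(2)[OF b] conj_le[OF dom, of u] by simp
qed

lemma conj_convex:
  shows "convex (conj_dom ft)" "convex_on (conj_dom ft) (conj ft)"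
proof -
  have main: "(1 - t) *\<^sub>R a + t *\<^sub>R b \<in> conj_dom ft \<and>
      conj ft ((1 - t) *\<^sub>R a + t *\<^sub>R b) \<le> (1 - t) * conj ft a + t * conj ft b"
    if "0 \<le> t" "t \<le> 1" "a \<in> conj_dom ft" "b \<in> conj_dom ft" for t a b
  proof -
    have "inner x ((1 - t) *\<^sub>R a + t *\<^sub>R b) - ft x \<le> (1 - t) * conj ft a + t * conj ft b" for x
    proof -
      have "inner x ((1 - t) *\<^sub>R a + t *\<^sub>R b) - ft x
          = (1 - t) * (inner x a - ft x) + t * (inner x b - ft x)"
        by (simp add: inner_add_right algebra_simps)
      also have "\<dots> \<le> (1 - t) * conj ft a + t * conj ft b"
        using conj_le[OF that(3), of x] conj_le[OF that(4), of x] that(1,2)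
        by (intro add_mono mult_left_mono) auto
      finally show ?thesis .
    qed
    then show ?thesis using conj_ub by blast
  qed
  show "convex (conj_dom ft)" unfolding convex_alt using main by blast
  then show "convex_on (conj_dom ft) (conj ft)" by (intro convex_onI) (use main in auto)
qed

lemma conj_breg_lower:
  fixes nx :: "'a::euclidean_space \<Rightarrow> real"
  assumes nrm: "is_norm nx"
    and cvx: "convex_on UNIV ft"
    and ft_grad: "\<And>u. (ft has_derivative (\<lambda>d. inner (gft u) d)) (at u)"
    and ft_lip: "\<And>u v. dual_norm nx (gft u - gft v) \<le> L * nx (u - v)"
    and sg: "is_subgrad_on (conj ft) (conj_dom ft) y1 s" and y2: "y2 \<in> conj_dom ft"
  shows "inner w (y2 - y1) - L / 2 * (nx w)\<^sup>2 \<le> conj ft y2 - conj ft y1 - inner s (y2 - y1)"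
proof -
  have y1: "y1 \<in> conj_dom ft" using sg by (simp add: is_subgrad_on_def)
  have gs: "gft s \<in> conj_dom ft" "conj ft (gft s) = inner s (gft s) - ft s"
    using conj_grad[OF cvx ft_grad] by auto
  have "conj ft y1 + inner s (gft s - y1) \<le> conj ft (gft s)"
    using sg gs(1) by (simp add: is_subgrad_on_def)
  then have c1: "conj ft y1 \<le> inner s y1 - ft s" using gs(2) by (simp add: inner_diff_right)
  have c2: "inner s y1 - ft s \<le> conj ft y1" by (rule conj_le[OF y1])
  have cy1: "conj ft y1 = inner s y1 - ft s" using c1 c2 by simp
  have sup1: "ft s + inner (u - s) y1 \<le> ft u" for u
    using conj_le[OF y1, of u] cy1 by (simp add: inner_diff_left)
  have gy: "gft s = y1"
  proof (rule ccontr)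
    assume ne: "gft s \<noteq> y1"
    define dl where "dl = y1 - gft s"
    have dpos: "inner dl dl > 0" using ne unfolding dl_def by simp
    define c where "c = L / 2 * (nx dl)\<^sup>2"
    have key: "inner dl dl \<le> c * t" if "t > 0" for t
    proof -
      have "ft s + inner ((s + t *\<^sub>R dl) - s) y1 \<le> ft (s + t *\<^sub>R dl)" by (rule sup1)
      also have "\<dots> \<le> ft s + inner (gft s) (t *\<^sub>R dl) + L / 2 * (nx (t *\<^sub>R dl))\<^sup>2"
        by (rule descent[OF nrm ft_grad ft_lip])
      finally have "t * inner dl y1 \<le> t * inner (gft s) dl + L / 2 * (t * nx dl)\<^sup>2"
        using isn_scale[OF nrm, of t dl] that by (simp add: inner_commute)
      then have "t * inner dl (y1 - gft s) \<le> t * (c * t)"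
        unfolding c_def by (simp add: inner_diff_right algebra_simps power2_eq_square inner_commute)
      then show ?thesis using that unfolding dl_def by simp
    qed
    define t where "t = inner dl dl / (2 * (\<bar>c\<bar> + 1))"
    have tpos: "t > 0" unfolding t_def using dpos by (simp add: add_pos_nonneg)
    have "c * t \<le> \<bar>c\<bar> * t" using tpos by (intro mult_right_mono) auto
    also have "\<dots> < (\<bar>c\<bar> + 1) * t" using tpos by simp
    also have "\<dots> = inner dl dl / 2" unfolding t_def
      by (simp add: field_simps add_pos_nonneg)
    finally show False using key[OF tpos] dpos by simp
  qed
  have "inner (s + w) y2 - ft (s + w) \<le> conj ft y2" by (rule conj_le[OF y2])
  moreover have "ft (s + w) \<le> ft s + inner (gft s) w + L / 2 * (nx w)\<^sup>2"
    by (rule descent[OF nrm ft_grad ft_lip])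
  moreover have "inner (s + w) y2 = inner s y2 + inner w y2" by (simp add: inner_add_left)
  moreover have "inner (gft s) w = inner w y1" using gy by (simp add: inner_commute)
  moreover have "inner w (y2 - y1) = inner w y2 - inner w y1" "inner s (y2 - y1) = inner s y2 - inner s y1"
    by (simp_all add: inner_diff_right)
  ultimately show ?thesis using cy1 by linarith
qed

lemma amgm_cross:
  fixes a K n1 n2 E F V U :: real
  assumes "0 \<le> a" "0 \<le> K" "0 \<le> n1" "0 \<le> n2" "0 \<le> E" "0 \<le> F"
    and "a\<^sup>2 * K\<^sup>2 \<le> E * F" and "n1\<^sup>2 / 2 \<le> V" and "n2\<^sup>2 / 2 \<le> U"
  shows "a * K * n1 * n2 \<le> E * V + F * U"
proof -
  define X where "X = a * K * n1 * n2"
  have X0: "0 \<le> X" unfolding X_def using assms by simp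
  have "X\<^sup>2 = (a\<^sup>2 * K\<^sup>2) * (n1\<^sup>2 * n2\<^sup>2)" unfolding X_def by (simp add: power_mult_distrib)
  also have "\<dots> \<le> (E * F) * (n1\<^sup>2 * n2\<^sup>2)" using assms(7) by (intro mult_right_mono) auto
  also have "\<dots> = (E * n1\<^sup>2) * (F * n2\<^sup>2)" by simp
  also have "\<dots> \<le> ((E * n1\<^sup>2 + F * n2\<^sup>2) / 2)\<^sup>2"
  proof -
    have "0 \<le> (E * n1\<^sup>2 - F * n2\<^sup>2)\<^sup>2" by simp
    then show ?thesis by (simp add: power2_eq_square algebra_simps)
  qed
  finally have "X \<le> (E * n1\<^sup>2 + F * n2\<^sup>2) / 2"
    by (rule power2_le_imp_le) (use assms in simp)
  also have "\<dots> \<le> E * V + F * U"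
  proof -
    have "E * (n1\<^sup>2 / 2) \<le> E * V" using assms(8) assms(5) by (rule mult_left_mono)
    moreover have "F * (n2\<^sup>2 / 2) \<le> F * U" using assms(9) assms(6) by (rule mult_left_mono)
    ultimately show ?thesis by simp
  qed
  finally show ?thesis unfolding X_def .
qed

lemma young_breg:
  fixes nx :: "'a::real_inner \<Rightarrow> real"
  assumes nrm: "is_norm nx"
    and W: "\<And>u. inner u v - L / 2 * (nx u)\<^sup>2 \<le> W"
    and L: "0 \<le> L" and a: "0 \<le> a" and b: "0 \<le> b" and c: "0 \<le> c" and abc: "a\<^sup>2 * L \<le> b * c"
  shows "a * inner D v \<le> b * W + c / 2 * (nx D)\<^sup>2"
proof (cases "b > 0")
  case True
  have "inner ((a / b) *\<^sub>R D) v - L / 2 * (nx ((a / b) *\<^sub>R D))\<^sup>2 \<le> W" by (rule W)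
  then have "(a / b) * inner D v - L / 2 * ((a / b)\<^sup>2 * (nx D)\<^sup>2) \<le> W"
    using isn_scale[OF nrm, of "a / b" D] a b by (simp add: power_mult_distrib power_divide)
  then have "b * ((a / b) * inner D v - L / 2 * ((a / b)\<^sup>2 * (nx D)\<^sup>2)) \<le> b * W"
    using b by (intro mult_left_mono) auto
  moreover have "b * ((a / b) * inner D v - L / 2 * ((a / b)\<^sup>2 * (nx D)\<^sup>2))
      = a * inner D v - (a\<^sup>2 * L / b) / 2 * (nx D)\<^sup>2"
    using True by (simp add: field_simps power2_eq_square)
  ultimately have 1: "a * inner D v - (a\<^sup>2 * L / b) / 2 * (nx D)\<^sup>2 \<le> b * W" by simp
  have "a\<^sup>2 * L / b \<le> c" using abc True by (simp add: field_simps)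
  then have "(a\<^sup>2 * L / b) / 2 * (nx D)\<^sup>2 \<le> c / 2 * (nx D)\<^sup>2" by (intro mult_right_mono) auto
  then show ?thesis using 1 by linarith
next
  case False
  then have b0: "b = 0" using b by simp
  have cn: "0 \<le> c / 2 * (nx D)\<^sup>2" using c by simp
  show ?thesis
  proof (cases "a = 0")
    case True then show ?thesis using b0 cn by simp
  next
    case False
    then have "a\<^sup>2 > 0" using a by simp
    then have L0: "L = 0" using abc b0 L by (simp add: mult_le_0_iff) 
    have "inner D v \<le> 0"
    proof (rule ccontr)
      assume "\<not> inner D v \<le> 0"
      then have pos: "inner D v > 0" by simp
      have "inner (((\<bar>W\<bar> + 1) / inner D v) *\<^sub>R D) v \<le> W" using W[of "((\<bar>W\<bar> + 1) / inner D v) *\<^sub>R D"] L0 by simp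
      then show False using pos by simp
    qed
    then have "a * inner D v \<le> 0" using a by (simp add: mult_nonneg_nonpos)
    then show ?thesis using b0 cn by simp
  qed
qed

lemma inner_telescope:
  fixes Qs a e g b f c r eta q alpha :: "nat \<Rightarrow> real" and mu p :: real and T :: nat
  assumes T: "1 \<le> T"
    and step: "\<And>t. t \<in> {1..T} \<Longrightarrow> Qs t \<le> eta t * (a (t - 1) - a t - e t) + p * (a 0 - a t - g t)
        - mu * a t + q t * (b (t - 1) - b t - f t) + alpha t * c (t - 1) - c t + alpha t * r t"
    and cross: "\<And>t. t \<in> {2..T} \<Longrightarrow> r t \<le> eta (t - 1) * e (t - 1) + q t * f t"
    and alpha: "\<And>t. t \<in> {2..T} \<Longrightarrow> alpha t = 1"
    and mono: "\<And>t. t \<in> {2..T} \<Longrightarrow> eta t \<le> mu + eta (t - 1) + p \<and> q t \<le> q (t - 1)"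
    and nn: "\<And>t. t \<in> {1..T} \<Longrightarrow> 0 \<le> a t \<and> 0 \<le> b t"
  shows "(\<Sum>t=1..T. Qs t) \<le> (eta 1 + real T * p) * a 0 - (mu + eta T + p) * a T - p * (\<Sum>t=1..T. g t)
     + q 1 * b 0 - q T * b T + alpha 1 * c 0 - c T - eta T * e T + (alpha 1 * r 1 - q 1 * f 1)"
proof -
  have "\<forall>m. 1 \<le> m \<longrightarrow> m \<le> T \<longrightarrow> (\<Sum>t=1..m. Qs t) \<le> (eta 1 + real m * p) * a 0 - (mu + eta m + p) * a m
     - p * (\<Sum>t=1..m. g t) + q 1 * b 0 - q m * b m + alpha 1 * c 0 - c m - eta m * e m
     + (alpha 1 * r 1 - q 1 * f 1)"
  proof
    fix m show "1 \<le> m \<longrightarrow> m \<le> T \<longrightarrow> (\<Sum>t=1..m. Qs t) \<le> (eta 1 + real m * p) * a 0 - (mu + eta m + p) * a m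
     - p * (\<Sum>t=1..m. g t) + q 1 * b 0 - q m * b m + alpha 1 * c 0 - c m - eta m * e m
     + (alpha 1 * r 1 - q 1 * f 1)"
    proof (induction m)
      case 0 then show ?case by simp
    next
      case (Suc m)
      show ?case
      proof (intro impI)
        assume m1: "1 \<le> Suc m" and mT: "Suc m \<le> T"
        show "(\<Sum>t=1..Suc m. Qs t) \<le> (eta 1 + real (Suc m) * p) * a 0 - (mu + eta (Suc m) + p) * a (Suc m)
          - p * (\<Sum>t=1..Suc m. g t) + q 1 * b 0 - q (Suc m) * b (Suc m) + alpha 1 * c 0 - c (Suc m)
          - eta (Suc m) * e (Suc m) + (alpha 1 * r 1 - q 1 * f 1)"
        proof (cases "m = 0")
          case True
          have "Qs 1 \<le> eta 1 * (a 0 - a 1 - e 1) + p * (a 0 - a 1 - g 1)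
            - mu * a 1 + q 1 * (b 0 - b 1 - f 1) + alpha 1 * c 0 - c 1 + alpha 1 * r 1"
            using step[of 1] T by simp
          then show ?thesis using True by (simp add: algebra_simps)
        next
          case False
          then have m: "1 \<le> m" "m \<le> T" using mT by auto
          have IH: "(\<Sum>t=1..m. Qs t) \<le> (eta 1 + real m * p) * a 0 - (mu + eta m + p) * a m
             - p * (\<Sum>t=1..m. g t) + q 1 * b 0 - q m * b m + alpha 1 * c 0 - c m - eta m * e m
             + (alpha 1 * r 1 - q 1 * f 1)" using Suc.IH m by simp
          have st: "Qs (Suc m) \<le> eta (Suc m) * (a m - a (Suc m) - e (Suc m)) + p * (a 0 - a (Suc m) - g (Suc m))
            - mu * a (Suc m) + q (Suc m) * (b m - b (Suc m) - f (Suc m)) + alpha (Suc m) * c m - c (Suc m)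
            + alpha (Suc m) * r (Suc m)" using step[of "Suc m"] mT by simp
          have s2: "Suc m \<in> {2..T}" using m mT by simp
          have al: "alpha (Suc m) = 1" using alpha[OF s2] .
          have cr: "r (Suc m) \<le> eta m * e m + q (Suc m) * f (Suc m)" using cross[OF s2] by simp
          have mo: "eta (Suc m) \<le> mu + eta m + p" "q (Suc m) \<le> q m" using mono[OF s2] by auto
          have nnm: "0 \<le> a m" "0 \<le> b m" using nn[of m] m by auto
          have A1: "eta (Suc m) * a m \<le> (mu + eta m + p) * a m" using mo(1) nnm(1) by (rule mult_right_mono)
          have A2: "q (Suc m) * b m \<le> q m * b m" using mo(2) nnm(2) by (rule mult_right_mono)
          have sQ: "(\<Sum>t=1..Suc m. Qs t) = (\<Sum>t=1..m. Qs t) + Qs (Suc m)" by simp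
          have sg: "(\<Sum>t=1..Suc m. g t) = (\<Sum>t=1..m. g t) + g (Suc m)" by simp
          have E1: "(eta 1 + real (Suc m) * p) * a 0 = (eta 1 + real m * p) * a 0 + p * a 0"
            by (simp add: algebra_simps)
          show ?thesis
            using IH st al cr A1 A2 E1
            unfolding sQ sg by (simp add: algebra_simps)
        qed
      qed
    qed
  qed
  then show ?thesis using T by simp
qed

lemma outer_telescope:
  fixes I Y Aa Bb Cc E R F G w s dd m nD :: "nat \<Rightarrow> real"
    and beta T etaO etaT qO qT p alphaO tau lam :: "nat \<Rightarrow> real" and mu :: real and N :: nat
  assumes N: "1 \<le> N"
    and pos: "\<And>k. k \<in> {1..N} \<Longrightarrow> 0 < beta k \<and> 0 < T k \<and> 0 \<le> p k \<and> 0 \<le> tau k"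
    and HI: "\<And>k. k \<in> {1..N} \<Longrightarrow> I k \<le> (etaO k + T k * p k) * Aa k - (mu + etaT k + p k) * Aa (Suc k)
        - p k * G k + qO k * Bb k - qT k * Bb (Suc k) + alphaO k * Cc k - Cc (Suc k) - etaT k * E k
        + (alphaO k * R k - qO k * F k)"
    and HY: "\<And>k. k \<in> {1..N} \<Longrightarrow> Y k \<le> tau k * (w (k - 1) - w k - s k) - w k + lam k * (dd (k - 1) + m k) - dd k"
    and HG: "\<And>k. k \<in> {1..N} \<Longrightarrow> nD k / 2 \<le> G k / T k"
    and nn: "\<And>k. k \<in> {1..N} \<Longrightarrow> 0 \<le> Aa (Suc k) \<and> 0 \<le> Bb (Suc k) \<and> 0 \<le> w k"
    and first: "alphaO 1 * R 1 - qO 1 * F 1 \<le> 0" "Cc 1 = 0" "tau 1 = 0" "dd 0 = 0" "m 1 = 0"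
    and crossk: "\<And>k. k \<in> {2..N} \<Longrightarrow> alphaO k * R k - qO k * F k \<le> alphaO k * etaT (k - 1) * E (k - 1)"
    and ycross: "\<And>k. k \<in> {2..N} \<Longrightarrow> beta (k - 1) * m k \<le> beta k * tau k * s k + beta (k - 1) * p (k - 1) / 2 * nD (k - 1)"
    and cond: "\<And>k. k \<in> {2..N} \<Longrightarrow>
         beta k * tau k \<le> beta (k - 1) * (tau (k - 1) + 1)
       \<and> beta (k - 1) = beta k * lam k
       \<and> beta k * T (k - 1) * alphaO k = beta (k - 1) * T k
       \<and> beta k * T (k - 1) * qO k \<le> beta (k - 1) * T k * qT (k - 1)
       \<and> beta k * T (k - 1) * (etaO k + p k * T k) \<le> beta (k - 1) * T k * (mu + etaT (k - 1) + p (k - 1))"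
    and fin1: "- Cc (Suc N) \<le> etaT N * E N + qT N * Bb (Suc N)"
    and fin2: "- (1 + tau N) * w N - dd N - p N / 2 * nD N \<le> 0"
    and fin3: "0 \<le> mu + etaT N + p N"
  shows "(\<Sum>k=1..N. beta k * (I k / T k + Y k)) \<le> beta 1 * (qO 1 / T 1 * Bb 1 + (etaO 1 / T 1 + p 1) * Aa 1)"
proof -
  define c where "c k = beta k / T k" for k
  define RHS where "RHS = beta 1 * (qO 1 / T 1 * Bb 1 + (etaO 1 / T 1 + p 1) * Aa 1)"
  define S where "S n = (RHS - c n * (mu + etaT n + p n) * Aa (Suc n) - c n * qT n * Bb (Suc n)
      - c n * Cc (Suc n) - c n * etaT n * E n - beta n * tau n * w n - beta n * w n - beta n * dd n
      - beta n * p n / 2 * nD n)" for n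
  have cpos: "0 < c k" if "k \<in> {1..N}" for k using pos[OF that] unfolding c_def by simp
  have split: "beta k * (I k / T k + Y k) = c k * I k + beta k * Y k" for k
    unfolding c_def by (simp add: algebra_simps)
  have pG: "beta k * p k / 2 * nD k \<le> c k * p k * G k" if "k \<in> {1..N}" for k
  proof -
    have "beta k * p k * (nD k / 2) \<le> beta k * p k * (G k / T k)"
      using HG[OF that] pos[OF that] by (intro mult_left_mono) auto
    then show ?thesis unfolding c_def by (simp add: algebra_simps)
  qed
  have HIc: "c k * I k \<le> c k * (etaO k + T k * p k) * Aa k - c k * (mu + etaT k + p k) * Aa (Suc k)
        - c k * p k * G k + c k * qO k * Bb k - c k * qT k * Bb (Suc k) + c k * alphaO k * Cc k - c k * Cc (Suc k)
        - c k * etaT k * E k + c k * (alphaO k * R k - qO k * F k)" if "k \<in> {1..N}" for k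
  proof -
    have "c k * I k \<le> c k * ((etaO k + T k * p k) * Aa k - (mu + etaT k + p k) * Aa (Suc k)
        - p k * G k + qO k * Bb k - qT k * Bb (Suc k) + alphaO k * Cc k - Cc (Suc k) - etaT k * E k
        + (alphaO k * R k - qO k * F k))"
      using HI[OF that] cpos[OF that] by (intro mult_left_mono) auto
    then show ?thesis by (simp add: algebra_simps)
  qed
  have HYb: "beta k * Y k \<le> beta k * tau k * w (k - 1) - beta k * tau k * w k - beta k * tau k * s k
      - beta k * w k + beta k * lam k * dd (k - 1) + beta k * lam k * m k - beta k * dd k" if "k \<in> {1..N}" for k
  proof -
    have "beta k * Y k \<le> beta k * (tau k * (w (k - 1) - w k - s k) - w k + lam k * (dd (k - 1) + m k) - dd k)"
      using HY[OF that] pos[OF that] by (intro mult_left_mono) auto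
    then show ?thesis by (simp add: algebra_simps)
  qed
  have main: "\<forall>n. 1 \<le> n \<longrightarrow> n \<le> N \<longrightarrow> (\<Sum>k=1..n. beta k * (I k / T k + Y k)) \<le> S n"
  proof
    fix n show "1 \<le> n \<longrightarrow> n \<le> N \<longrightarrow> (\<Sum>k=1..n. beta k * (I k / T k + Y k)) \<le> S n"
    proof (induction n)
      case 0 then show ?case by simp
    next
      case (Suc n)
      show ?case
      proof (intro impI)
        assume n1: "1 \<le> Suc n" and nN: "Suc n \<le> N"
        have k1: "Suc n \<in> {1..N}" using nN by simp
        show "(\<Sum>k=1..Suc n. beta k * (I k / T k + Y k)) \<le> S (Suc n)"
        proof (cases "n = 0")
          case True
          have 1: "(1::nat) \<in> {1..N}" using N by simp
          have e1: "c 1 * (etaO 1 + T 1 * p 1) * Aa 1 + c 1 * qO 1 * Bb 1 = RHS"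
            unfolding RHS_def c_def using pos[OF 1] by (simp add: field_simps)
          have z: "c 1 * alphaO 1 * Cc 1 = 0" "beta 1 * tau 1 * w 0 = 0" "beta 1 * tau 1 * w 1 = 0"
            "beta 1 * tau 1 * s 1 = 0" "beta 1 * lam 1 * dd 0 = 0" "beta 1 * lam 1 * m 1 = 0"
            using first by auto
          have f1: "c 1 * (alphaO 1 * R 1 - qO 1 * F 1) \<le> 0"
            using first(1) cpos[OF 1] by (simp add: mult_nonneg_nonpos)
          have sn: "Suc n = 1" using True by simp
          have s1: "(\<Sum>k=1..1. beta k * (I k / T k + Y k)) = c 1 * I 1 + beta 1 * Y 1"
            using split by simp
          show ?thesis unfolding sn s1 S_def using HIc[OF 1] HYb[OF 1] pG[OF 1] e1 z f1
            by (simp only: diff_self_eq_0 diff_self)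
        next
          case False
          then have n: "n \<in> {1..N}" using nN by simp
          have IH: "(\<Sum>k=1..n. beta k * (I k / T k + Y k)) \<le> S n" using Suc.IH n by simp
          have k2: "Suc n \<in> {2..N}" using n nN by simp
          note cd = cond[OF k2]
          have cd': "beta (Suc n) * tau (Suc n) \<le> beta n * (tau n + 1)"
            "beta n = beta (Suc n) * lam (Suc n)"
            "beta (Suc n) * T n * alphaO (Suc n) = beta n * T (Suc n)"
            "beta (Suc n) * T n * qO (Suc n) \<le> beta n * T (Suc n) * qT n"
            "beta (Suc n) * T n * (etaO (Suc n) + p (Suc n) * T (Suc n)) \<le> beta n * T (Suc n) * (mu + etaT n + p n)"
            using cd by auto
          have Tp: "0 < T n" "0 < T (Suc n)" using pos[OF n] pos[OF k1] by auto
          have F4: "c (Suc n) * (etaO (Suc n) + T (Suc n) * p (Suc n)) \<le> c n * (mu + etaT n + p n)"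
            using cd'(5) Tp unfolding c_def by (simp add: field_simps)
          have F5: "c (Suc n) * qO (Suc n) \<le> c n * qT n"
            using cd'(4) Tp unfolding c_def by (simp add: field_simps)
          have F6: "c (Suc n) * alphaO (Suc n) = c n"
            using cd'(3) Tp unfolding c_def by (simp add: field_simps)
          have nnA: "0 \<le> Aa (Suc n)" "0 \<le> Bb (Suc n)" "0 \<le> w n" using nn[OF n] by auto
          have G4: "c (Suc n) * (etaO (Suc n) + T (Suc n) * p (Suc n)) * Aa (Suc n) \<le> c n * (mu + etaT n + p n) * Aa (Suc n)"
            using F4 nnA(1) by (rule mult_right_mono)
          have G5: "c (Suc n) * qO (Suc n) * Bb (Suc n) \<le> c n * qT n * Bb (Suc n)"
            using F5 nnA(2) by (rule mult_right_mono)
          have G6: "c (Suc n) * alphaO (Suc n) * Cc (Suc n) = c n * Cc (Suc n)" using F6 by simp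
          have G7: "c (Suc n) * (alphaO (Suc n) * R (Suc n) - qO (Suc n) * F (Suc n)) \<le> c n * etaT n * E n"
          proof -
            have "c (Suc n) * (alphaO (Suc n) * R (Suc n) - qO (Suc n) * F (Suc n))
                \<le> c (Suc n) * (alphaO (Suc n) * etaT n * E n)"
              using crossk[OF k2] cpos[OF k1] by (intro mult_left_mono) auto
            also have "\<dots> = c n * etaT n * E n" using F6 by (simp add: mult.assoc[symmetric])
            finally show ?thesis .
          qed
          have G8: "beta (Suc n) * tau (Suc n) * w n \<le> beta n * tau n * w n + beta n * w n"
          proof -
            have "beta (Suc n) * tau (Suc n) * w n \<le> beta n * (tau n + 1) * w n"
              using cd'(1) nnA(3) by (rule mult_right_mono)
            then show ?thesis by (simp add: algebra_simps)
          qed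
          have G9: "beta (Suc n) * lam (Suc n) * dd n = beta n * dd n"
            "beta (Suc n) * lam (Suc n) * m (Suc n) = beta n * m (Suc n)" using cd'(2) by simp_all
          have G10: "beta n * m (Suc n) \<le> beta (Suc n) * tau (Suc n) * s (Suc n) + beta n * p n / 2 * nD n"
            using ycross[OF k2] by simp
          have sS: "(\<Sum>k=1..Suc n. beta k * (I k / T k + Y k)) = (\<Sum>k=1..n. beta k * (I k / T k + Y k))
              + (c (Suc n) * I (Suc n) + beta (Suc n) * Y (Suc n))" using split by simp
          show ?thesis using IH HIc[OF k1] HYb[OF k1] pG[OF k1] G4 G5 G6 G7 G8 G9 G10
            unfolding sS S_def by simp
        qed
      qed
    qed
  qed
  have SN: "(\<Sum>k=1..N. beta k * (I k / T k + Y k)) \<le> S N" using main N by simp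
  have NN: "N \<in> {1..N}" using N by simp
  have t1: "0 \<le> c N * (mu + etaT N + p N) * Aa (Suc N)"
    using cpos[OF NN] fin3 nn[OF NN] by simp
  have t2: "0 \<le> c N * qT N * Bb (Suc N) + c N * Cc (Suc N) + c N * etaT N * E N"
  proof -
    have "0 \<le> c N * (etaT N * E N + qT N * Bb (Suc N) + Cc (Suc N))"
      using fin1 cpos[OF NN] by simp
    then show ?thesis by (simp add: algebra_simps)
  qed
  have t3: "0 \<le> beta N * tau N * w N + beta N * w N + beta N * dd N + beta N * p N / 2 * nD N"
  proof -
    have "0 \<le> (1 + tau N) * w N + dd N + p N / 2 * nD N" using fin2 by linarith
    then have "0 \<le> beta N * ((1 + tau N) * w N + dd N + p N / 2 * nD N)"
      using pos[OF NN] by simp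
    then show ?thesis by (simp add: algebra_simps)
  qed
  show ?thesis using SN t1 t2 t3 unfolding S_def RHS_def by linarith
qed

lemma x_prox:
  assumes lin: "linear A"
    and am: "is_argmin_on X (\<lambda>v. inner ((mu + e + p) *\<^sub>R nu' xt + yk - e *\<^sub>R nu' a1 - p *\<^sub>R nu' a2) v + inner (A v) zt) xt"
    and v: "v \<in> X"
  shows "mu * nu xt - mu * nu v + inner (xt - v) yk + inner (A (xt - v)) zt
    \<le> e * (breg nu nu' a1 v - breg nu nu' xt v - breg nu nu' a1 xt)
     + p * (breg nu nu' a2 v - breg nu nu' xt v - breg nu nu' a2 xt) - mu * breg nu nu' xt v"
proof -
  have "inner ((mu + e + p) *\<^sub>R nu' xt + yk - e *\<^sub>R nu' a1 - p *\<^sub>R nu' a2) xt + inner (A xt) zt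
     \<le> inner ((mu + e + p) *\<^sub>R nu' xt + yk - e *\<^sub>R nu' a1 - p *\<^sub>R nu' a2) v + inner (A v) zt"
    using am v unfolding is_argmin_on_def by blast
  then show ?thesis
    by (simp add: breg_def linear_diff[OF lin] inner_diff_left inner_diff_right inner_add_left
        inner_add_right algebra_simps inner_commute)
qed

lemma z_prox:
  assumes am: "is_argmin_on Z (\<lambda>v. h v + inner (- (A u) + q *\<^sub>R (zeta' zt - zeta' zp)) v) zt"
    and v: "v \<in> Z"
  shows "h zt - h v - inner (A u) (zt - v)
    \<le> q * (breg zeta zeta' zp v - breg zeta zeta' zt v - breg zeta zeta' zp zt)"
proof -
  have "h zt + inner (- (A u) + q *\<^sub>R (zeta' zt - zeta' zp)) zt \<le> h v + inner (- (A u) + q *\<^sub>R (zeta' zt - zeta' zp)) v"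
    using am v unfolding is_argmin_on_def by blast
  then show ?thesis
    by (simp add: breg_def inner_diff_left inner_diff_right inner_add_left
        inner_add_right algebra_simps inner_commute)
qed

lemma y_prox:
  assumes am: "is_argmin_on D (\<lambda>v. inner (- xt + (1 + tau) *\<^sub>R fs' y1 - tau *\<^sub>R fs' y0) v) y1"
    and v: "v \<in> D"
  shows "cf y1 - cf v - inner xt (y1 - v)
    \<le> tau * (breg cf fs' y0 v - breg cf fs' y1 v - breg cf fs' y0 y1) - breg cf fs' y1 v"
proof -
  have "inner (- xt + (1 + tau) *\<^sub>R fs' y1 - tau *\<^sub>R fs' y0) y1 \<le> inner (- xt + (1 + tau) *\<^sub>R fs' y1 - tau *\<^sub>R fs' y0) v"
    using am v unfolding is_argmin_on_def by blast
  then show ?thesis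
    by (simp add: breg_def inner_diff_left inner_diff_right inner_add_left
        inner_add_right algebra_simps inner_commute)
qed

lemma sc_convex:
  assumes cx: "convex X" and sc: "strongly_convex_wrt 1 n X g" and nrm: "is_norm n"
  shows "convex_on X g"
proof (rule convex_onI[OF _ cx])
  fix t :: real and x y assume "0 < t" "t < 1" "x \<in> X" "y \<in> X"
  then have "g (t *\<^sub>R y + (1 - t) *\<^sub>R x) \<le> t * g y + (1 - t) * g x - 1 / 2 * t * (1 - t) * (n (y - x))\<^sup>2"
    using sc unfolding strongly_convex_wrt_def by auto
  moreover have "0 \<le> 1 / 2 * t * (1 - t) * (n (y - x))\<^sup>2" using \<open>0 < t\<close> \<open>t < 1\<close> by simp
  ultimately show "g ((1 - t) *\<^sub>R x + t *\<^sub>R y) \<le> (1 - t) * g x + t * g y" by (simp add: add.commute)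
qed

lemma breg_convex2:
  assumes "convex_on X g"
  shows "convex_on X (\<lambda>b. breg g g' a b)"
proof -
  have "convex_on X (\<lambda>b. g b + (- g a - inner (g' a) (b - a)))"
  proof (rule convex_on_add[OF assms])
    show "convex_on X (\<lambda>b. - g a - inner (g' a) (b - a))"
    proof (rule convex_onI)
      fix t :: real and x y
      have "- g a - inner (g' a) ((1 - t) *\<^sub>R x + t *\<^sub>R y - a)
          = (1 - t) * (- g a - inner (g' a) (x - a)) + t * (- g a - inner (g' a) (y - a))"
        by (simp add: inner_add_right inner_diff_right algebra_simps)
      then show "- g a - inner (g' a) ((1 - t) *\<^sub>R x + t *\<^sub>R y - a)
          \<le> (1 - t) * (- g a - inner (g' a) (x - a)) + t * (- g a - inner (g' a) (y - a))" by simp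
    next
      show "convex X" using assms by (simp add: convex_on_def)
    qed
  qed
  then show ?thesis unfolding breg_def by (simp add: algebra_simps)
qed

lemma breg_nonneg:
  assumes "is_subgrad_on g S a (g' a)" "b \<in> S"
  shows "0 \<le> breg g g' a b"
  using assms unfolding is_subgrad_on_def breg_def by auto

lemma wavg_eq: "wavg beta N v = (\<Sum>k=1..N. (beta k / (\<Sum>j=1..N. beta j)) *\<^sub>R v k)"
  unfolding wavg_def by (simp add: scaleR_sum_right)

lemma wavg_convex:
  assumes f: "convex_on C f" and C: "convex C" and N: "1 \<le> N"
    and v: "\<And>k. k \<in> {1..N} \<Longrightarrow> v k \<in> C" and b: "\<And>k. k \<in> {1..N} \<Longrightarrow> 0 < beta k"
  shows "wavg beta N v \<in> C" "f (wavg beta N v) \<le> (1 / (\<Sum>k=1..N. beta k)) * (\<Sum>k=1..N. beta k * f (v k))"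
proof -
  define S where "S = (\<Sum>k=1..N. beta k)"
  have Sp: "0 < S" unfolding S_def using N b by (intro sum_pos) auto
  have a1: "(\<Sum>k=1..N. beta k / S) = 1" using Sp unfolding S_def by (simp add: sum_divide_distrib[symmetric])
  have a0: "\<And>k. k \<in> {1..N} \<Longrightarrow> 0 \<le> beta k / S" using b Sp by (simp add: less_imp_le)
  show "wavg beta N v \<in> C" unfolding wavg_eq S_def[symmetric]
    by (rule convex_sum[OF _ C a1 a0 v]) auto
  have "f (wavg beta N v) \<le> (\<Sum>k=1..N. beta k / S * f (v k))" unfolding wavg_eq S_def[symmetric]
    by (rule convex_on_sum[OF _ _ f a1 a0 v]) (use N in auto)
  also have "\<dots> = (1 / S) * (\<Sum>k=1..N. beta k * f (v k))" by (simp add: sum_distrib_left)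
  finally show "f (wavg beta N v) \<le> (1 / (\<Sum>k=1..N. beta k)) * (\<Sum>k=1..N. beta k * f (v k))"
    unfolding S_def .
qed

lemma tavg_as_wavg: "(1 / real T) *\<^sub>R (\<Sum>t=1..T. u t) = wavg (\<lambda>_. 1) T u"
  unfolding wavg_def by simp

lemma tavg_convex:
  assumes f: "convex_on C f" and C: "convex C" and T: "1 \<le> T"
    and u: "\<And>t. t \<in> {1..T} \<Longrightarrow> u t \<in> C"
  shows "(1 / real T) *\<^sub>R (\<Sum>t=1..T. u t) \<in> C" "f ((1 / real T) *\<^sub>R (\<Sum>t=1..T. u t)) \<le> (1 / real T) * (\<Sum>t=1..T. f (u t))"
proof -
  have "wavg (\<lambda>_. 1) T u \<in> C" "f (wavg (\<lambda>_. 1) T u) \<le> (1 / (\<Sum>k=1..T. (\<lambda>_. 1::real) k)) * (\<Sum>k=1..T. (\<lambda>_. 1::real) k * f (u k))"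
    by (rule wavg_convex[OF f C T u]; simp)+
  then show "(1 / real T) *\<^sub>R (\<Sum>t=1..T. u t) \<in> C" "f ((1 / real T) *\<^sub>R (\<Sum>t=1..T. u t)) \<le> (1 / real T) * (\<Sum>t=1..T. f (u t))"
    unfolding tavg_as_wavg by auto
qed

lemma wavg_linear:
  assumes "linear l"
  shows "l (wavg beta N v) = (1 / (\<Sum>k=1..N. beta k)) * (\<Sum>k=1..N. beta k * l (v k))"
  unfolding wavg_def using assms by (simp add: linear_sum linear_cmul sum_distrib_left)

lemma tavg_linear:
  assumes "linear l"
  shows "l ((1 / real T) *\<^sub>R (\<Sum>t=1..T. u t)) = (1 / real T) * (\<Sum>t=1..T. l (u t))"
  using assms by (simp add: linear_sum linear_cmul sum_divide_distrib)

lemma ident_lin: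
  assumes A: "linear A"
  shows "inner (A (P + al *\<^sub>R (P - Q))) (Z1 - zz) - inner (A X1) (Z1 - zz)
    = - inner (A (X1 - P)) (Z1 - zz) + al * inner (A (P - Q)) (Z0 - zz) + al * inner (A (P - Q)) (Z1 - Z0)"
  by (simp add: linear_diff[OF A] linear_add[OF A] linear_cmul[OF A] inner_diff_left inner_diff_right
      inner_add_left inner_add_right algebra_simps)

lemma cross_gen:
  fixes nx :: "'a::euclidean_space \<Rightarrow> real" and nz :: "'b::euclidean_space \<Rightarrow> real"
  assumes nx: "is_norm nx" and nz: "is_norm nz" and A: "linear A"
    and cX: "convex X" and nu: "strongly_convex_wrt 1 nx X nu"
    and cZ: "convex Z" and zeta: "strongly_convex_wrt 1 nz Z zeta"
    and a1: "is_subgrad_on nu X a1 (nu' a1)" and a2: "a2 \<in> X"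
    and z1: "is_subgrad_on zeta Z z1 (zeta' z1)" and z2: "z2 \<in> Z"
    and al: "0 \<le> al" and E: "0 \<le> E" and F: "0 \<le> F" and c: "al\<^sup>2 * (op_norm nx nz A)\<^sup>2 \<le> E * F"
  shows "al * inner (A (a2 - a1)) (z2 - z1) \<le> E * breg nu nu' a1 a2 + F * breg zeta zeta' z1 z2"
proof -
  have "al * inner (A (a2 - a1)) (z2 - z1) \<le> al * (op_norm nx nz A * nx (a2 - a1) * nz (z2 - z1))"
    using op_cs(1)[OF nx nz A] al by (intro mult_left_mono) auto
  also have "\<dots> = al * op_norm nx nz A * nx (a2 - a1) * nz (z2 - z1)" by simp
  also have "\<dots> \<le> E * breg nu nu' a1 a2 + F * breg zeta zeta' z1 z2"
  proof (rule amgm_cross[OF al op_cs(2)[OF nx nz A] isn_nonneg[OF nx] isn_nonneg[OF nz] E F c])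
    show "(nx (a2 - a1))\<^sup>2 / 2 \<le> breg nu nu' a1 a2"
      using breg_sc_lower[OF nx cX nu a1 a2] unfolding breg_def .
    show "(nz (z2 - z1))\<^sup>2 / 2 \<le> breg zeta zeta' z1 z2"
      using breg_sc_lower[OF nz cZ zeta z1 z2] unfolding breg_def .
  qed
  finally show ?thesis .
qed

lemma young_gen:
  fixes nx :: "'a::euclidean_space \<Rightarrow> real"
  assumes nrm: "is_norm nx"
    and cvx: "convex_on UNIV ft"
    and ft_grad: "\<And>u. (ft has_derivative (\<lambda>d. inner (gft u) d)) (at u)"
    and ft_lip: "\<And>u v. dual_norm nx (gft u - gft v) \<le> L * nx (u - v)"
    and L: "0 \<le> L"
    and sg: "is_subgrad_on (conj ft) (conj_dom ft) y1 (fs' y1)" and y2: "y2 \<in> conj_dom ft"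
    and a: "0 \<le> a" and b: "0 \<le> b" and c: "0 \<le> c" and abc: "a\<^sup>2 * L \<le> b * c"
  shows "a * inner Dv (y2 - y1) \<le> b * breg (conj ft) fs' y1 y2 + c / 2 * (nx Dv)\<^sup>2"
proof (rule young_breg[OF nrm _ L a b c abc])
  fix u show "inner u (y2 - y1) - L / 2 * (nx u)\<^sup>2 \<le> breg (conj ft) fs' y1 y2"
    using conj_breg_lower[OF nrm cvx ft_grad ft_lip sg y2, of u] unfolding breg_def by simp
qed

lemma L_nonneg:
  fixes nx :: "'a::euclidean_space \<Rightarrow> real"
  assumes nrm: "is_norm nx" and ft_lip: "\<And>u v. dual_norm nx (gft u - gft v) \<le> L * nx (u - v)"
  shows "0 \<le> L"
proof -
  obtain i :: 'a where i: "i \<in> Basis" using nonempty_Basis by blast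
  then have "i \<noteq> 0" by auto
  then have pos: "nx i > 0" using isn_zero[OF nrm, of i] isn_nonneg[OF nrm, of i] by simp
  have "0 \<le> L * nx (i - 0)" using ft_lip[of i 0] dual_cs(2)[OF nrm] by (meson order_trans)
  then show ?thesis using pos by (simp add: zero_le_mult_iff)
qed

lemma util_eq:
  assumes "1 \<le> t"
  shows "util T alpha x xin k t = xin k (t - 1) + alpha k t *\<^sub>R (xin k (t - 1)
     - (if t - 1 = 0 then (if k = 1 then x 0 else xin (k - 1) (T (k - 1) - 1)) else xin k (t - 1 - 1)))"
  using assms unfolding util_def Let_def by (cases "t = 1") (auto simp: numeral_2_eq_2 diff_diff_add)

lemma part1:
  fixes X :: "'a::euclidean_space set" and Z :: "'b::euclidean_space set"
    and nx :: "'a \<Rightarrow> real" and nz :: "'b \<Rightarrow> real"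
    and A :: "'a \<Rightarrow> 'b" and h :: "'b \<Rightarrow> real"
    and mu :: real and nu :: "'a \<Rightarrow> real" and nu' :: "'a \<Rightarrow> 'a"
    and ft :: "'a \<Rightarrow> real" and gft :: "'a \<Rightarrow> 'a" and L :: real and fs' :: "'a \<Rightarrow> 'a"
    and zeta :: "'b \<Rightarrow> real" and zeta' :: "'b \<Rightarrow> 'b"
    and T :: "nat \<Rightarrow> nat" and beta p lam tau :: "nat \<Rightarrow> real"
    and q eta alpha :: "nat \<Rightarrow> nat \<Rightarrow> real" and N :: nat
    and x y :: "nat \<Rightarrow> 'a" and z :: "nat \<Rightarrow> 'b"
    and xin :: "nat \<Rightarrow> nat \<Rightarrow> 'a" and zin :: "nat \<Rightarrow> nat \<Rightarrow> 'b"
  assumes X: "closed X" "convex X" "X \<noteq> {}"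
    and Z: "closed Z" "convex Z" "Z \<noteq> {}"
    and norms: "is_norm nx" "is_norm nz"
    and A: "linear A"
    and h: "convex_on Z h"
    and mu: "0 \<le> mu"
    and nu: "strongly_convex_wrt 1 nx X nu"
    and ft_cvx: "convex_on UNIV ft"
    and ft_grad: "\<And>u. (ft has_derivative (\<lambda>d. inner (gft u) d)) (at u)"
    and ft_lip: "\<And>u v. dual_norm nx (gft u - gft v) \<le> L * nx (u - v)"
    and zeta: "strongly_convex_wrt 1 nz Z zeta"
    and N: "1 \<le> N"
    and pos: "\<And>k. k \<in> {1..N} \<Longrightarrow> 0 < T k \<and> 0 < beta k \<and> 0 < p k \<and> 0 \<le> lam k \<and> 0 \<le> tau k"
    and pos_t: "\<And>k t. k \<in> {1..N} \<Longrightarrow> t \<in> {1..T k} \<Longrightarrow> 0 < q k t \<and> 0 < eta k t \<and> 0 \<le> alpha k t"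
    and cond_i: "\<And>k. k \<in> {2..N} \<Longrightarrow>
         beta k * tau k \<le> beta (k - 1) * (tau (k - 1) + 1)
       \<and> beta (k - 1) = beta k * lam k
       \<and> L * lam k \<le> p (k - 1) * tau k
       \<and> beta k * real (T (k - 1)) * alpha k 1 = beta (k - 1) * real (T k)
       \<and> alpha k 1 * (op_norm nx nz A)\<^sup>2 \<le> eta (k - 1) (T (k - 1)) * q k 1
       \<and> beta k * real (T (k - 1)) * q k 1 \<le> beta (k - 1) * real (T k) * q (k - 1) (T (k - 1))
       \<and> beta k * real (T (k - 1)) * (eta k 1 + p k * real (T k))
           \<le> beta (k - 1) * real (T k) * (mu + eta (k - 1) (T (k - 1)) + p (k - 1))"
    and cond_ii: "\<And>k t. k \<in> {1..N} \<Longrightarrow> t \<in> {2..T k} \<Longrightarrow>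
         alpha k t = 1
       \<and> (op_norm nx nz A)\<^sup>2 \<le> eta k (t - 1) * q k t
       \<and> q k t \<le> q k (t - 1)
       \<and> eta k t \<le> mu + eta k (t - 1) + p k"
    and cond_iii: "tau 1 = 0" "L \<le> p N * (tau N + 1)" "(op_norm nx nz A)\<^sup>2 \<le> eta N (T N) * q N (T N)"
    and init: "x 0 \<in> X" "y 0 \<in> conj_dom ft" "z 0 \<in> Z"
    and alg: "pds_spp X Z A mu nu nu' ft fs' h zeta zeta' T lam tau alpha q eta p N x y z xin zin"
    and sg: "pds_subgrad_convention X Z A mu nu nu' ft fs' h zeta zeta' T lam tau alpha q eta p N x y z xin zin"
  shows "\<forall>xx\<in>X. \<forall>yy\<in>conj_dom ft. \<forall>zz\<in>Z.
           gapQ A mu nu ft h (wavg beta N (xhat T x xin)) (wavg beta N y) (wavg beta N (zhat T zin)) xx yy zz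
           \<le> (1 / (\<Sum>k=1..N. beta k)) * beta 1 *
               (q 1 1 / real (T 1) * breg zeta zeta' (z 0) zz
                + (eta 1 1 / real (T 1) + p 1) * breg nu nu' (x 0) xx)"
proof (intro ballI)
  fix xx yy zz assume xx: "xx \<in> X" and yy: "yy \<in> conj_dom ft" and zz: "zz \<in> Z"
  define K where "K = op_norm nx nz A"
  define S where "S = (\<Sum>k=1..N. beta k)"
  have Lnn: "0 \<le> L" by (rule L_nonneg[OF norms(1) ft_lip])
  have cnu: "convex_on X nu" by (rule sc_convex[OF X(2) nu norms(1)])
  have Kn: "0 \<le> K" unfolding K_def by (rule op_cs(2)[OF norms A])
  have yk_dom: "y k \<in> conj_dom ft" if "k \<in> {1..N}" for k
    using alg that unfolding pds_spp_def is_argmin_on_def by blast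
  have x0k: "xin k 0 = x (k - 1)" if "k \<in> {1..N}" for k
    using alg that unfolding pds_spp_def by blast
  have z0k: "zin k 0 = z (k - 1)" if "k \<in> {1..N}" for k
    using alg that unfolding pds_spp_def by blast
  have xk: "x k = xin k (T k)" if "k \<in> {1..N}" for k
    using alg that unfolding pds_spp_def by blast
  have zk: "z k = zin k (T k)" if "k \<in> {1..N}" for k
    using alg that unfolding pds_spp_def by blast
  have sg0: "is_subgrad_on nu X (x 0) (nu' (x 0))" "is_subgrad_on (conj ft) (conj_dom ft) (y 0) (fs' (y 0))"
    "is_subgrad_on zeta Z (z 0) (zeta' (z 0))"
    using sg unfolding pds_subgrad_convention_def by blast+
  have sgy: "is_subgrad_on (conj ft) (conj_dom ft) (y k) (fs' (y k))" if "k \<in> {1..N}" for k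
    using sg that unfolding pds_subgrad_convention_def by blast
  have amy: "is_argmin_on (conj_dom ft)
          (\<lambda>v. inner (- xtil T lam x xin k + (1 + tau k) *\<^sub>R fs' (y k) - tau k *\<^sub>R fs' (y (k - 1))) v) (y k)"
    if "k \<in> {1..N}" for k
    using sg that unfolding pds_subgrad_convention_def by blast
  have sgz: "is_subgrad_on zeta Z (zin k t) (zeta' (zin k t))" if "k \<in> {1..N}" "t \<in> {1..T k}" for k t
    using sg that unfolding pds_subgrad_convention_def by blast
  have amz: "is_argmin_on Z
             (\<lambda>v. h v + inner (- A (util T alpha x xin k t) + q k t *\<^sub>R (zeta' (zin k t) - zeta' (zin k (t - 1)))) v)
             (zin k t)" if "k \<in> {1..N}" "t \<in> {1..T k}" for k t
    using sg that unfolding pds_subgrad_convention_def by blast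
  have sgx: "is_subgrad_on nu X (xin k t) (nu' (xin k t))" if "k \<in> {1..N}" "t \<in> {1..T k}" for k t
    using sg that unfolding pds_subgrad_convention_def by blast
  have amx: "is_argmin_on X
             (\<lambda>v. inner ((mu + eta k t + p k) *\<^sub>R nu' (xin k t) + y k
                          - eta k t *\<^sub>R nu' (xin k (t - 1)) - p k *\<^sub>R nu' (x (k - 1))) v
                  + inner (A v) (zin k t))
             (xin k t)" if "k \<in> {1..N}" "t \<in> {1..T k}" for k t
    using sg that unfolding pds_subgrad_convention_def by blast
  have T1: "1 \<le> T k" if "k \<in> {1..N}" for k using pos[OF that] by simp
  have sgxall: "is_subgrad_on nu X (x k) (nu' (x k))" if "k \<le> N" for k
  proof (cases "k = 0")
    case True then show ?thesis using sg0 by simp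
  next
    case False then have k: "k \<in> {1..N}" using that by simp
    show ?thesis using sgx[OF k, of "T k"] T1[OF k] xk[OF k] by simp
  qed
  have sgzall: "is_subgrad_on zeta Z (z k) (zeta' (z k))" if "k \<le> N" for k
  proof (cases "k = 0")
    case True then show ?thesis using sg0 by simp
  next
    case False then have k: "k \<in> {1..N}" using that by simp
    show ?thesis using sgz[OF k, of "T k"] T1[OF k] zk[OF k] by simp
  qed
  have sgyall: "is_subgrad_on (conj ft) (conj_dom ft) (y k) (fs' (y k))" if "k \<le> N" for k
    using sg0(2) sgy that by (cases "k = 0") auto
  have sgxin: "is_subgrad_on nu X (xin k t) (nu' (xin k t))" if "k \<in> {1..N}" "t \<le> T k" for k t
  proof (cases "t = 0")
    case True
    have "k - 1 \<le> N" using that(1) by auto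
    then show ?thesis using sgxall[of "k - 1"] x0k[OF that(1)] True by simp
  next
    case False then show ?thesis using sgx[OF that(1)] that(2) by simp
  qed
  have sgzin: "is_subgrad_on zeta Z (zin k t) (zeta' (zin k t))" if "k \<in> {1..N}" "t \<le> T k" for k t
  proof (cases "t = 0")
    case True
    have "k - 1 \<le> N" using that(1) by auto
    then show ?thesis using sgzall[of "k - 1"] z0k[OF that(1)] True by simp
  next
    case False then show ?thesis using sgz[OF that(1)] that(2) by simp
  qed
  have xinX: "xin k t \<in> X" if "k \<in> {1..N}" "t \<le> T k" for k t
    using sgxin[OF that] by (simp add: is_subgrad_on_def)
  have zinZ: "zin k t \<in> Z" if "k \<in> {1..N}" "t \<le> T k" for k t
    using sgzin[OF that] by (simp add: is_subgrad_on_def)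
  have xX: "x k \<in> X" if "k \<le> N" for k using sgxall[OF that] by (simp add: is_subgrad_on_def)
  have zZ: "z k \<in> Z" if "k \<le> N" for k using sgzall[OF that] by (simp add: is_subgrad_on_def)
  have yD: "y k \<in> conj_dom ft" if "k \<le> N" for k using sgyall[OF that] by (simp add: is_subgrad_on_def)

  define xprev where "xprev k = (if k = 1 then x 0 else xin (k - 1) (T (k - 1) - 1))" for k
  define prvx where "prvx k s = (if s = 0 then xprev k else xin k (s - 1))" for k s
  define cc where "cc k t = (if t = 0 then inner (A (x (k - 1) - xprev k)) (z (k - 1) - zz)
      else inner (A (xin k t - xin k (t - 1))) (zin k t - zz))" for k t
  define rr where "rr k t = inner (A (xin k (t - 1) - prvx k (t - 1))) (zin k t - zin k (t - 1))" for k t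
  define Qs where "Qs k t = mu * nu (xin k t) - mu * nu xx + inner (xin k t - xx) (y k)
      + inner (A (xin k t - xx)) (zin k t) + (h (zin k t) - h zz - inner (A (xin k t)) (zin k t - zz))" for k t
  define I where "I k = (\<Sum>t=1..T k. Qs k t)" for k
  define Dx where "Dx k = xhat T x xin k - x (k - 1)" for k
  define Yv where "Yv k = conj ft (y k) - conj ft yy - inner (xhat T x xin k) (y k - yy)" for k

  have util': "util T alpha x xin k t = xin k (t - 1) + alpha k t *\<^sub>R (xin k (t - 1) - prvx k (t - 1))"
    if "1 \<le> t" for k t
    using util_eq[OF that, of T alpha x xin k] unfolding prvx_def xprev_def by simp

  have HIk: "I k \<le> (eta k 1 + real (T k) * p k) * breg nu nu' (x (k - 1)) xx
        - (mu + eta k (T k) + p k) * breg nu nu' (x k) xx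
        - p k * (\<Sum>t=1..T k. breg nu nu' (x (k - 1)) (xin k t))
        + q k 1 * breg zeta zeta' (z (k - 1)) zz - q k (T k) * breg zeta zeta' (z k) zz
        + alpha k 1 * cc k 0 - cc (Suc k) 0
        - eta k (T k) * breg nu nu' (xin k (T k - 1)) (xin k (T k))
        + (alpha k 1 * rr k 1 - q k 1 * breg zeta zeta' (zin k 0) (zin k 1))" if k: "k \<in> {1..N}" for k
  proof -
    have step: "Qs k t \<le> eta k t * (breg nu nu' (xin k (t - 1)) xx - breg nu nu' (xin k t) xx
          - breg nu nu' (xin k (t - 1)) (xin k t))
        + p k * (breg nu nu' (xin k 0) xx - breg nu nu' (xin k t) xx - breg nu nu' (x (k - 1)) (xin k t))
        - mu * breg nu nu' (xin k t) xx
        + q k t * (breg zeta zeta' (zin k (t - 1)) zz - breg zeta zeta' (zin k t) zz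
          - breg zeta zeta' (zin k (t - 1)) (zin k t))
        + alpha k t * cc k (t - 1) - cc k t + alpha k t * rr k t" if t: "t \<in> {1..T k}" for t
    proof -
      have xp: "mu * nu (xin k t) - mu * nu xx + inner (xin k t - xx) (y k) + inner (A (xin k t - xx)) (zin k t)
          \<le> eta k t * (breg nu nu' (xin k (t - 1)) xx - breg nu nu' (xin k t) xx - breg nu nu' (xin k (t - 1)) (xin k t))
           + p k * (breg nu nu' (x (k - 1)) xx - breg nu nu' (xin k t) xx - breg nu nu' (x (k - 1)) (xin k t))
           - mu * breg nu nu' (xin k t) xx"
        by (rule x_prox[OF A amx[OF k t] xx])
      have zp: "h (zin k t) - h zz - inner (A (util T alpha x xin k t)) (zin k t - zz)
          \<le> q k t * (breg zeta zeta' (zin k (t - 1)) zz - breg zeta zeta' (zin k t) zz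
             - breg zeta zeta' (zin k (t - 1)) (zin k t))"
        by (rule z_prox[where A = A and u = "util T alpha x xin k t" and h = h and q = "q k t" and zeta' = zeta', OF amz[OF k t] zz])
      have t1: "1 \<le> t" using t by simp
      have ccT: "cc k t = inner (A (xin k t - xin k (t - 1))) (zin k t - zz)" using t1 unfolding cc_def by simp
      have ccT1: "cc k (t - 1) = inner (A (xin k (t - 1) - prvx k (t - 1))) (zin k (t - 1) - zz)"
        unfolding cc_def prvx_def using x0k[OF k] z0k[OF k] by auto
      have idt: "inner (A (util T alpha x xin k t)) (zin k t - zz) - inner (A (xin k t)) (zin k t - zz)
          = - cc k t + alpha k t * cc k (t - 1) + alpha k t * rr k t"
        unfolding util'[OF t1] ccT ccT1 rr_def by (rule ident_lin[OF A])
      show ?thesis using xp zp idt x0k[OF k] unfolding Qs_def by (simp add: algebra_simps)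
    qed
    have cross: "rr k t \<le> eta k (t - 1) * breg nu nu' (xin k (t - 1 - 1)) (xin k (t - 1))
        + q k t * breg zeta zeta' (zin k (t - 1)) (zin k t)" if t: "t \<in> {2..T k}" for t
    proof -
      have r: "rr k t = 1 * inner (A (xin k (t - 1) - xin k (t - 1 - 1))) (zin k t - zin k (t - 1))"
        unfolding rr_def prvx_def using t by simp
      have c2: "K\<^sup>2 \<le> eta k (t - 1) * q k t" using cond_ii[OF k t] unfolding K_def by simp
      have "1 * inner (A (xin k (t - 1) - xin k (t - 1 - 1))) (zin k t - zin k (t - 1))
          \<le> eta k (t - 1) * breg nu nu' (xin k (t - 1 - 1)) (xin k (t - 1))
          + q k t * breg zeta zeta' (zin k (t - 1)) (zin k t)"
      proof (rule cross_gen[OF norms A X(2) nu Z(2) zeta])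
        show "is_subgrad_on nu X (xin k (t - 1 - 1)) (nu' (xin k (t - 1 - 1)))" using t by (intro sgxin[OF k]) auto
        show "xin k (t - 1) \<in> X" using t by (intro xinX[OF k]) auto
        show "is_subgrad_on zeta Z (zin k (t - 1)) (zeta' (zin k (t - 1)))" using t by (intro sgzin[OF k]) auto
        show "zin k t \<in> Z" using t by (intro zinZ[OF k]) auto
        have "t - 1 \<in> {1..T k}" using t by auto
        then show "0 \<le> eta k (t - 1)" using pos_t[OF k, of "t - 1"] by auto
        show "0 \<le> q k t" using pos_t[OF k, of t] t by auto
        show "1\<^sup>2 * (op_norm nx nz A)\<^sup>2 \<le> eta k (t - 1) * q k t" using c2 unfolding K_def by simp
      qed simp
      then show ?thesis using r by simp
    qed
    have IT: "(\<Sum>t=1..T k. Qs k t) \<le> (eta k 1 + real (T k) * p k) * breg nu nu' (xin k 0) xx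
        - (mu + eta k (T k) + p k) * breg nu nu' (xin k (T k)) xx
        - p k * (\<Sum>t=1..T k. breg nu nu' (x (k - 1)) (xin k t))
        + q k 1 * breg zeta zeta' (zin k 0) zz - q k (T k) * breg zeta zeta' (zin k (T k)) zz
        + alpha k 1 * cc k 0 - cc k (T k)
        - eta k (T k) * breg nu nu' (xin k (T k - 1)) (xin k (T k))
        + (alpha k 1 * rr k 1 - q k 1 * breg zeta zeta' (zin k (1 - 1)) (zin k 1))"
    proof (rule inner_telescope[where a = "\<lambda>t. breg nu nu' (xin k t) xx"
          and e = "\<lambda>t. breg nu nu' (xin k (t - 1)) (xin k t)"
          and g = "\<lambda>t. breg nu nu' (x (k - 1)) (xin k t)"
          and b = "\<lambda>t. breg zeta zeta' (zin k t) zz"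
          and f = "\<lambda>t. breg zeta zeta' (zin k (t - 1)) (zin k t)"
          and c = "cc k" and r = "rr k" and eta = "eta k" and q = "q k" and alpha = "alpha k"
          and mu = mu and p = "p k", OF T1[OF k] step cross])
      show "\<And>t. t \<in> {2..T k} \<Longrightarrow> alpha k t = 1" using cond_ii[OF k] by blast
      show "\<And>t. t \<in> {2..T k} \<Longrightarrow> eta k t \<le> mu + eta k (t - 1) + p k \<and> q k t \<le> q k (t - 1)"
        using cond_ii[OF k] by blast
      show "\<And>t. t \<in> {1..T k} \<Longrightarrow> 0 \<le> breg nu nu' (xin k t) xx \<and> 0 \<le> breg zeta zeta' (zin k t) zz"
      proof -
        fix t assume "t \<in> {1..T k}"
        then have "t \<le> T k" by simp
        then show "0 \<le> breg nu nu' (xin k t) xx \<and> 0 \<le> breg zeta zeta' (zin k t) zz"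
          using breg_nonneg[where g' = nu', OF sgxin[OF k] xx] breg_nonneg[where g' = zeta', OF sgzin[OF k] zz]
          by blast
      qed
    qed
    have ccS: "cc k (T k) = cc (Suc k) 0"
      unfolding cc_def xprev_def using T1[OF k] xk[OF k] zk[OF k] k by auto
    show ?thesis using IT unfolding I_def ccS using x0k[OF k] z0k[OF k] xk[OF k] zk[OF k] by simp
  qed

  have HYk: "Yv k \<le> tau k * (breg (conj ft) fs' (y (k - 1)) yy - breg (conj ft) fs' (y k) yy
        - breg (conj ft) fs' (y (k - 1)) (y k)) - breg (conj ft) fs' (y k) yy
      + lam k * (inner (Dx (k - 1)) (y (k - 1) - yy) + inner (Dx (k - 1)) (y k - y (k - 1)))
      - inner (Dx k) (y k - yy)" if k: "k \<in> {1..N}" for k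
  proof -
    have yp: "conj ft (y k) - conj ft yy - inner (xtil T lam x xin k) (y k - yy)
      \<le> tau k * (breg (conj ft) fs' (y (k - 1)) yy - breg (conj ft) fs' (y k) yy
        - breg (conj ft) fs' (y (k - 1)) (y k)) - breg (conj ft) fs' (y k) yy"
      by (rule y_prox[OF amy[OF k] yy])
    have xt: "xtil T lam x xin k = x (k - 1) + lam k *\<^sub>R Dx (k - 1)"
      unfolding xtil_def Dx_def by (simp add: diff_diff_add numeral_2_eq_2)
    have xh: "xhat T x xin k = Dx k + x (k - 1)" unfolding Dx_def by simp
    have "inner (xtil T lam x xin k) (y k - yy) - inner (xhat T x xin k) (y k - yy)
        = lam k * (inner (Dx (k - 1)) (y (k - 1) - yy) + inner (Dx (k - 1)) (y k - y (k - 1)))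
          - inner (Dx k) (y k - yy)"
      unfolding xt xh by (simp add: inner_add_left inner_diff_right algebra_simps)
    then show ?thesis using yp unfolding Yv_def by linarith
  qed
  have xhat_eq: "xhat T x xin k = (1 / real (T k)) *\<^sub>R (\<Sum>t=1..T k. xin k t)" if "k \<in> {1..N}" for k
    using that unfolding xhat_def by simp
  have HGk: "(nx (Dx k))\<^sup>2 / 2 \<le> (\<Sum>t=1..T k. breg nu nu' (x (k - 1)) (xin k t)) / real (T k)"
    if k: "k \<in> {1..N}" for k
  proof -
    have inX: "\<And>t. t \<in> {1..T k} \<Longrightarrow> xin k t \<in> X" using xinX[OF k] by auto
    have m: "xhat T x xin k \<in> X" unfolding xhat_eq[OF k]
      by (rule tavg_convex(1)[OF breg_convex2[OF cnu] X(2) T1[OF k] inX])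
    have j: "breg nu nu' (x (k - 1)) (xhat T x xin k) \<le> (1 / real (T k)) * (\<Sum>t=1..T k. breg nu nu' (x (k - 1)) (xin k t))"
      unfolding xhat_eq[OF k]
      by (rule tavg_convex(2)[OF breg_convex2[OF cnu] X(2) T1[OF k] inX])
    have km: "k - 1 \<le> N" using k by auto
    have "(nx (xhat T x xin k - x (k - 1)))\<^sup>2 / 2 \<le> breg nu nu' (x (k - 1)) (xhat T x xin k)"
      using breg_sc_lower[OF norms(1) X(2) nu sgxall[OF km] m] unfolding breg_def .
    moreover have "(1 / real (T k)) * (\<Sum>t=1..T k. breg nu nu' (x (k - 1)) (xin k t))
       = (\<Sum>t=1..T k. breg nu nu' (x (k - 1)) (xin k t)) / real (T k)" by simp
    ultimately show ?thesis using j unfolding Dx_def by linarith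
  qed
  have Dx0: "Dx 0 = 0" unfolding Dx_def xhat_def by simp
  have nnk: "0 \<le> breg nu nu' (x k) xx \<and> 0 \<le> breg zeta zeta' (z k) zz \<and> 0 \<le> breg (conj ft) fs' (y k) yy"
    if k: "k \<in> {1..N}" for k
  proof -
    have "k \<le> N" using k by simp
    then show ?thesis
      using breg_nonneg[where g' = nu', OF sgxall xx] breg_nonneg[where g' = zeta', OF sgzall zz]
        breg_nonneg[where g' = fs', OF sgyall yy] by blast
  qed
  have N1: "(1::nat) \<in> {1..N}" using N by simp
  have rr1: "rr 1 1 = 0" unfolding rr_def prvx_def xprev_def using x0k[OF N1] linear_0[OF A] by simp
  have cc1: "cc 1 0 = 0" unfolding cc_def xprev_def using linear_0[OF A] by simp
  have first1: "alpha 1 1 * rr 1 1 - q 1 1 * breg zeta zeta' (zin 1 0) (zin 1 1) \<le> 0"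
  proof -
    have "0 \<le> breg zeta zeta' (zin 1 0) (zin 1 1)"
      using breg_nonneg[where g' = zeta', OF sgzin[OF N1, of 0] zinZ[OF N1, of 1]] T1[OF N1] by simp
    moreover have "0 < q 1 1" using pos_t[OF N1, of 1] T1[OF N1] by simp
    ultimately show ?thesis using rr1 by simp
  qed
  have crossk: "alpha k 1 * rr k 1 - q k 1 * breg zeta zeta' (zin k 0) (zin k 1)
      \<le> alpha k 1 * eta (k - 1) (T (k - 1)) * breg nu nu' (xin (k - 1) (T (k - 1) - 1)) (xin (k - 1) (T (k - 1)))"
    if k: "k \<in> {2..N}" for k
  proof -
    have k1: "k \<in> {1..N}" and km: "k - 1 \<in> {1..N}" using k by auto
    have r: "rr k 1 = inner (A (xin (k - 1) (T (k - 1)) - xin (k - 1) (T (k - 1) - 1))) (zin k 1 - zin k 0)"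
      unfolding rr_def prvx_def xprev_def using k x0k[OF k1] xk[OF km] by auto
    have al: "0 \<le> alpha k 1" using pos_t[OF k1, of 1] T1[OF k1] by simp
    have c5: "alpha k 1 * K\<^sup>2 \<le> eta (k - 1) (T (k - 1)) * q k 1" using cond_i[OF k] unfolding K_def by simp
    have "alpha k 1 * inner (A (xin (k - 1) (T (k - 1)) - xin (k - 1) (T (k - 1) - 1))) (zin k 1 - zin k 0)
        \<le> (alpha k 1 * eta (k - 1) (T (k - 1))) * breg nu nu' (xin (k - 1) (T (k - 1) - 1)) (xin (k - 1) (T (k - 1)))
          + q k 1 * breg zeta zeta' (zin k 0) (zin k 1)"
    proof (rule cross_gen[OF norms A X(2) nu Z(2) zeta])
      show "is_subgrad_on nu X (xin (k - 1) (T (k - 1) - 1)) (nu' (xin (k - 1) (T (k - 1) - 1)))"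
        by (rule sgxin[OF km]) simp
      show "xin (k - 1) (T (k - 1)) \<in> X" by (rule xinX[OF km]) simp
      show "is_subgrad_on zeta Z (zin k 0) (zeta' (zin k 0))" by (rule sgzin[OF k1]) simp
      show "zin k 1 \<in> Z" by (rule zinZ[OF k1]) (use T1[OF k1] in simp)
      show "0 \<le> alpha k 1" by (rule al)
      show "0 \<le> alpha k 1 * eta (k - 1) (T (k - 1))"
        using al pos_t[OF km, of "T (k - 1)"] T1[OF km] by simp
      show "0 \<le> q k 1" using pos_t[OF k1, of 1] T1[OF k1] by simp
      have "(alpha k 1)\<^sup>2 * K\<^sup>2 = alpha k 1 * (alpha k 1 * K\<^sup>2)" by (simp add: power2_eq_square)
      also have "\<dots> \<le> alpha k 1 * (eta (k - 1) (T (k - 1)) * q k 1)" using c5 al by (rule mult_left_mono)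
      finally show "(alpha k 1)\<^sup>2 * (op_norm nx nz A)\<^sup>2 \<le> alpha k 1 * eta (k - 1) (T (k - 1)) * q k 1"
        unfolding K_def by (simp add: mult.assoc)
    qed
    then show ?thesis unfolding r by linarith
  qed
  have ycross: "beta (k - 1) * inner (Dx (k - 1)) (y k - y (k - 1))
      \<le> beta k * tau k * breg (conj ft) fs' (y (k - 1)) (y k) + beta (k - 1) * p (k - 1) / 2 * (nx (Dx (k - 1)))\<^sup>2"
    if k: "k \<in> {2..N}" for k
  proof (rule young_gen[OF norms(1) ft_cvx ft_grad ft_lip Lnn])
    have k1: "k \<in> {1..N}" and km: "k - 1 \<in> {1..N}" using k by auto
    show "is_subgrad_on (conj ft) (conj_dom ft) (y (k - 1)) (fs' (y (k - 1)))" using k by (intro sgyall) auto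
    show "y k \<in> conj_dom ft" using yk_dom[OF k1] .
    show "0 \<le> beta (k - 1)" using pos[OF km] by simp
    show "0 \<le> beta k * tau k" using pos[OF k1] by simp
    show "0 \<le> beta (k - 1) * p (k - 1)" using pos[OF km] by simp
    have c: "beta (k - 1) = beta k * lam k" "L * lam k \<le> p (k - 1) * tau k" using cond_i[OF k] by auto
    have "(beta (k - 1))\<^sup>2 * L = beta (k - 1) * beta k * (L * lam k)" using c(1) by (simp add: power2_eq_square algebra_simps)
    also have "\<dots> \<le> beta (k - 1) * beta k * (p (k - 1) * tau k)"
      using c(2) pos[OF km] pos[OF k1] by (intro mult_left_mono) auto
    also have "\<dots> = beta k * tau k * (beta (k - 1) * p (k - 1))" by (simp add: algebra_simps)
    finally show "(beta (k - 1))\<^sup>2 * L \<le> beta k * tau k * (beta (k - 1) * p (k - 1))" .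
  qed
  have NN: "N \<in> {1..N}" using N by simp
  have fin1: "- cc (Suc N) 0 \<le> eta N (T N) * breg nu nu' (xin N (T N - 1)) (xin N (T N))
      + q N (T N) * breg zeta zeta' (z N) zz"
  proof -
    have e: "- cc (Suc N) 0 = 1 * inner (A (xin N (T N) - xin N (T N - 1))) (zz - z N)"
      unfolding cc_def xprev_def using N xk[OF NN] by (simp add: inner_diff_right)
    have "1 * inner (A (xin N (T N) - xin N (T N - 1))) (zz - z N)
        \<le> eta N (T N) * breg nu nu' (xin N (T N - 1)) (xin N (T N)) + q N (T N) * breg zeta zeta' (z N) zz"
    proof (rule cross_gen[OF norms A X(2) nu Z(2) zeta])
      show "is_subgrad_on nu X (xin N (T N - 1)) (nu' (xin N (T N - 1)))" by (rule sgxin[OF NN]) simp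
      show "xin N (T N) \<in> X" by (rule xinX[OF NN]) simp
      show "is_subgrad_on zeta Z (z N) (zeta' (z N))" by (rule sgzall) simp
      show "0 \<le> eta N (T N)" using pos_t[OF NN, of "T N"] T1[OF NN] by simp
      show "0 \<le> q N (T N)" using pos_t[OF NN, of "T N"] T1[OF NN] by simp
      show "1\<^sup>2 * (op_norm nx nz A)\<^sup>2 \<le> eta N (T N) * q N (T N)" using cond_iii(3) by simp
    qed (use zz in simp_all)
    then show ?thesis using e by simp
  qed
  have fin2: "- (1 + tau N) * breg (conj ft) fs' (y N) yy - inner (Dx N) (y N - yy) - p N / 2 * (nx (Dx N))\<^sup>2 \<le> 0"
  proof -
    have "1 * inner (Dx N) (yy - y N) \<le> (1 + tau N) * breg (conj ft) fs' (y N) yy + p N / 2 * (nx (Dx N))\<^sup>2"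
    proof (rule young_gen[OF norms(1) ft_cvx ft_grad ft_lip Lnn])
      show "is_subgrad_on (conj ft) (conj_dom ft) (y N) (fs' (y N))" by (rule sgyall) simp
      show "0 \<le> 1 + tau N" using pos[OF NN] by simp
      show "0 \<le> p N" using pos[OF NN] by simp
      show "1\<^sup>2 * L \<le> (1 + tau N) * p N" using cond_iii(2) by (simp add: algebra_simps)
    qed (use yy in simp_all)
    then show ?thesis by (simp add: inner_diff_right algebra_simps)
  qed
  have fin3: "0 \<le> mu + eta N (T N) + p N" using mu pos[OF NN] pos_t[OF NN, of "T N"] T1[OF NN] by simp
  have OT: "(\<Sum>k=1..N. beta k * (I k / real (T k) + Yv k))
      \<le> beta 1 * (q 1 1 / real (T 1) * breg zeta zeta' (z (1 - 1)) zz + (eta 1 1 / real (T 1) + p 1) * breg nu nu' (x (1 - 1)) xx)"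
  apply (rule outer_telescope[where I = I and Y = Yv and Aa = "\<lambda>k. breg nu nu' (x (k - 1)) xx"
      and Bb = "\<lambda>k. breg zeta zeta' (z (k - 1)) zz" and Cc = "\<lambda>k. cc k 0"
      and E = "\<lambda>k. breg nu nu' (xin k (T k - 1)) (xin k (T k))" and R = "\<lambda>k. rr k 1"
      and F = "\<lambda>k. breg zeta zeta' (zin k 0) (zin k 1)"
      and G = "\<lambda>k. \<Sum>t=1..T k. breg nu nu' (x (k - 1)) (xin k t)"
      and w = "\<lambda>k. breg (conj ft) fs' (y k) yy" and s = "\<lambda>k. breg (conj ft) fs' (y (k - 1)) (y k)"
      and dd = "\<lambda>k. inner (Dx k) (y k - yy)" and m = "\<lambda>k. inner (Dx (k - 1)) (y k - y (k - 1))"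
      and nD = "\<lambda>k. (nx (Dx k))\<^sup>2" and beta = beta and T = "\<lambda>k. real (T k)"
      and etaO = "\<lambda>k. eta k 1" and etaT = "\<lambda>k. eta k (T k)" and qO = "\<lambda>k. q k 1" and qT = "\<lambda>k. q k (T k)"
      and p = p and alphaO = "\<lambda>k. alpha k 1" and tau = tau and lam = lam and mu = mu and N = N])
    subgoal by (rule N)
    subgoal for k using pos[of k] by simp
    subgoal for k using HIk[of k] by simp
    subgoal for k using HYk[of k] by simp
    subgoal for k using HGk[of k] by simp
    subgoal for k using nnk[of k] by simp
    subgoal using first1 by simp
    subgoal using cc1 by simp
    subgoal using cond_iii(1) by simp
    subgoal using Dx0 by simp
    subgoal using Dx0 by simp
    subgoal for k using crossk[of k] by simp
    subgoal for k using ycross[of k] by simp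
    subgoal for k using cond_i[of k] by blast
    subgoal using fin1 by simp
    subgoal using fin2 by simp
    subgoal using fin3 by simp
    done
  define xb where "xb = wavg beta N (xhat T x xin)"
  define yb where "yb = wavg beta N y"
  define zb where "zb = wavg beta N (zhat T zin)"
  define M where "M \<phi> = (1 / S) * (\<Sum>k=1..N. beta k * ((1 / real (T k)) * (\<Sum>t=1..T k. \<phi> k t)))"
    for \<phi> :: "nat \<Rightarrow> nat \<Rightarrow> real"
  have Sp: "0 < S" unfolding S_def using N pos by (intro sum_pos) auto
  have bp: "\<And>k. k \<in> {1..N} \<Longrightarrow> 0 < beta k" using pos by blast
  have M_add: "M (\<lambda>k t. f k t + g k t) = M f + M g" for f g
    unfolding M_def by (simp add: sum.distrib distrib_left)
  have M_diff: "M (\<lambda>k t. f k t - g k t) = M f - M g" for f g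
    unfolding M_def by (simp add: sum_subtractf right_diff_distrib)
  have M_scale: "M (\<lambda>k t. c * f k t) = c * M f" for c f
    unfolding M_def by (simp add: sum_distrib_left mult_ac)
  have zhat_eq: "zhat T zin k = (1 / real (T k)) *\<^sub>R (\<Sum>t=1..T k. zin k t)" for k
    unfolding zhat_def by simp
  have xhX: "xhat T x xin k \<in> X" if k: "k \<in> {1..N}" for k
    unfolding xhat_eq[OF k] by (rule tavg_convex(1)[OF cnu X(2) T1[OF k]]) (use xinX[OF k] in auto)
  have zhZ: "zhat T zin k \<in> Z" if k: "k \<in> {1..N}" for k
    unfolding zhat_eq by (rule tavg_convex(1)[OF h Z(2) T1[OF k]]) (use zinZ[OF k] in auto)
  have mono_avg: "(1 / S) * (\<Sum>k=1..N. beta k * a k) \<le> M \<phi>"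
    if "\<And>k. k \<in> {1..N} \<Longrightarrow> a k \<le> (1 / real (T k)) * (\<Sum>t=1..T k. \<phi> k t)" for a \<phi>
  proof -
    have "(\<Sum>k=1..N. beta k * a k) \<le> (\<Sum>k=1..N. beta k * ((1 / real (T k)) * (\<Sum>t=1..T k. \<phi> k t)))"
      by (rule sum_mono, rule mult_left_mono) (use that bp in \<open>auto intro: less_imp_le\<close>)
    then show ?thesis unfolding M_def using Sp by (intro mult_left_mono) auto
  qed
  have lin_avg: "(1 / S) * (\<Sum>k=1..N. beta k * a k) = M \<phi>"
    if "\<And>k. k \<in> {1..N} \<Longrightarrow> a k = (1 / real (T k)) * (\<Sum>t=1..T k. \<phi> k t)" for a \<phi>
  proof -
    have "(\<Sum>k=1..N. beta k * a k) = (\<Sum>k=1..N. beta k * ((1 / real (T k)) * (\<Sum>t=1..T k. \<phi> k t)))"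
      by (rule sum.cong) (use that in auto)
    then show ?thesis unfolding M_def by simp
  qed
  have B1: "nu xb \<le> M (\<lambda>k t. nu (xin k t))"
  proof -
    have "nu xb \<le> (1 / S) * (\<Sum>k=1..N. beta k * nu (xhat T x xin k))"
      unfolding xb_def S_def by (rule wavg_convex(2)[OF cnu X(2) N xhX bp])
    also have "\<dots> \<le> M (\<lambda>k t. nu (xin k t))"
    proof (rule mono_avg)
      fix k assume k: "k \<in> {1..N}"
      show "nu (xhat T x xin k) \<le> (1 / real (T k)) * (\<Sum>t=1..T k. nu (xin k t))"
        unfolding xhat_eq[OF k] by (rule tavg_convex(2)[OF cnu X(2) T1[OF k]]) (use xinX[OF k] in auto)
    qed
    finally show ?thesis .
  qed
  have B7: "h zb \<le> M (\<lambda>k t. h (zin k t))"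
  proof -
    have "h zb \<le> (1 / S) * (\<Sum>k=1..N. beta k * h (zhat T zin k))"
      unfolding zb_def S_def by (rule wavg_convex(2)[OF h Z(2) N zhZ bp])
    also have "\<dots> \<le> M (\<lambda>k t. h (zin k t))"
    proof (rule mono_avg)
      fix k assume k: "k \<in> {1..N}"
      show "h (zhat T zin k) \<le> (1 / real (T k)) * (\<Sum>t=1..T k. h (zin k t))"
        unfolding zhat_eq by (rule tavg_convex(2)[OF h Z(2) T1[OF k]]) (use zinZ[OF k] in auto)
    qed
    finally show ?thesis .
  qed
  have B6: "conj ft yb \<le> (1 / S) * (\<Sum>k=1..N. beta k * conj ft (y k))"
    unfolding yb_def S_def by (rule wavg_convex(2)[OF conj_convex(2) conj_convex(1) N yk_dom bp])
  have linl: "linear (\<lambda>v. inner v a)" for a :: 'a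
    by (rule bounded_linear.linear[OF bounded_linear_inner_left])
  have linr: "linear (\<lambda>v. inner a v)" for a :: 'b
    by (rule bounded_linear.linear[OF bounded_linear_inner_right])
  have linr': "linear (\<lambda>v. inner a v)" for a :: 'a
    by (rule bounded_linear.linear[OF bounded_linear_inner_right])
  have linAz: "linear (\<lambda>v. inner (A v) zz)"
    by (rule linearI) (simp_all add: linear_add[OF A] linear_cmul[OF A] inner_add_left)
  have B2: "inner xb yy = M (\<lambda>k t. inner (xin k t) yy)"
  proof -
    have "inner xb yy = (1 / S) * (\<Sum>k=1..N. beta k * inner (xhat T x xin k) yy)"
      unfolding xb_def S_def by (rule wavg_linear[OF linl])
    also have "\<dots> = M (\<lambda>k t. inner (xin k t) yy)"
    proof (rule lin_avg)
      fix k assume k: "k \<in> {1..N}"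
      show "inner (xhat T x xin k) yy = (1 / real (T k)) * (\<Sum>t=1..T k. inner (xin k t) yy)"
        unfolding xhat_eq[OF k] by (rule tavg_linear[OF linl])
    qed
    finally show ?thesis .
  qed
  have B3: "inner (A xb) zz = M (\<lambda>k t. inner (A (xin k t)) zz)"
  proof -
    have "inner (A xb) zz = (1 / S) * (\<Sum>k=1..N. beta k * inner (A (xhat T x xin k)) zz)"
      unfolding xb_def S_def by (rule wavg_linear[OF linAz])
    also have "\<dots> = M (\<lambda>k t. inner (A (xin k t)) zz)"
    proof (rule lin_avg)
      fix k assume k: "k \<in> {1..N}"
      show "inner (A (xhat T x xin k)) zz = (1 / real (T k)) * (\<Sum>t=1..T k. inner (A (xin k t)) zz)"
        unfolding xhat_eq[OF k] by (rule tavg_linear[OF linAz])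
    qed
    finally show ?thesis .
  qed
  have B5: "inner (A xx) zb = M (\<lambda>k t. inner (A xx) (zin k t))"
  proof -
    have "inner (A xx) zb = (1 / S) * (\<Sum>k=1..N. beta k * inner (A xx) (zhat T zin k))"
      unfolding zb_def S_def by (rule wavg_linear[OF linr])
    also have "\<dots> = M (\<lambda>k t. inner (A xx) (zin k t))"
    proof (rule lin_avg)
      fix k assume k: "k \<in> {1..N}"
      show "inner (A xx) (zhat T zin k) = (1 / real (T k)) * (\<Sum>t=1..T k. inner (A xx) (zin k t))"
        unfolding zhat_eq by (rule tavg_linear[OF linr])
    qed
    finally show ?thesis .
  qed
  have B4: "inner xx yb = (1 / S) * (\<Sum>k=1..N. beta k * inner xx (y k))"
    unfolding yb_def S_def by (rule wavg_linear[OF linr'])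
  define \<phi> where "\<phi> k t = mu * nu (xin k t) + inner (xin k t) yy + inner (A (xin k t)) zz
      - inner (A xx) (zin k t) + h (zin k t)" for k t
  have Mphi: "M \<phi> = mu * M (\<lambda>k t. nu (xin k t)) + M (\<lambda>k t. inner (xin k t) yy)
      + M (\<lambda>k t. inner (A (xin k t)) zz) - M (\<lambda>k t. inner (A xx) (zin k t)) + M (\<lambda>k t. h (zin k t))"
    unfolding \<phi>_def by (simp only: M_add M_diff M_scale)
  have perk: "I k / real (T k) + Yv k = (1 / real (T k)) * (\<Sum>t=1..T k. \<phi> k t)
      + conj ft (y k) - inner xx (y k) - (conj ft yy + h zz + mu * nu xx)" if k: "k \<in> {1..N}" for k
  proof -
    define C where "C = inner xx (y k) + h zz + mu * nu xx"
    have q: "Qs k t = \<phi> k t - C + inner (xin k t) (y k - yy)" for t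
      unfolding Qs_def \<phi>_def C_def
      by (simp add: linear_diff[OF A] inner_diff_left inner_diff_right algebra_simps inner_commute)
    have Ik: "I k = (\<Sum>t=1..T k. \<phi> k t) - real (T k) * C + (\<Sum>t=1..T k. inner (xin k t) (y k - yy))"
      unfolding I_def q by (simp add: sum.distrib sum_subtractf)
    have Yk: "Yv k = conj ft (y k) - conj ft yy - (1 / real (T k)) * (\<Sum>t=1..T k. inner (xin k t) (y k - yy))"
      unfolding Yv_def xhat_eq[OF k] tavg_linear[OF linl] ..
    have Tp: "0 < real (T k)" using T1[OF k] by simp
    show ?thesis unfolding Ik Yk C_def using Tp by (simp add: field_simps)
  qed
  have EQ: "(1 / S) * (\<Sum>k=1..N. beta k * (I k / real (T k) + Yv k))
      = M \<phi> + (1 / S) * (\<Sum>k=1..N. beta k * conj ft (y k)) - (1 / S) * (\<Sum>k=1..N. beta k * inner xx (y k))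
        - (conj ft yy + h zz + mu * nu xx)"
  proof -
    have "(\<Sum>k=1..N. beta k * (I k / real (T k) + Yv k))
        = (\<Sum>k=1..N. beta k * ((1 / real (T k)) * (\<Sum>t=1..T k. \<phi> k t)) + beta k * conj ft (y k)
            - beta k * inner xx (y k) - beta k * (conj ft yy + h zz + mu * nu xx))"
    proof (rule sum.cong)
      fix k assume k: "k \<in> {1..N}"
      show "beta k * (I k / real (T k) + Yv k) = beta k * ((1 / real (T k)) * (\<Sum>t=1..T k. \<phi> k t)) + beta k * conj ft (y k)
            - beta k * inner xx (y k) - beta k * (conj ft yy + h zz + mu * nu xx)"
        unfolding perk[OF k] by (simp add: algebra_simps)
    qed simp
    also have "\<dots> = (\<Sum>k=1..N. beta k * ((1 / real (T k)) * (\<Sum>t=1..T k. \<phi> k t)))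
        + (\<Sum>k=1..N. beta k * conj ft (y k)) - (\<Sum>k=1..N. beta k * inner xx (y k))
        - S * (conj ft yy + h zz + mu * nu xx)"
      unfolding S_def by (simp add: sum.distrib sum_subtractf sum_distrib_right)
    finally have E1: "(\<Sum>k=1..N. beta k * (I k / real (T k) + Yv k))
        = (\<Sum>k=1..N. beta k * ((1 / real (T k)) * (\<Sum>t=1..T k. \<phi> k t)))
        + (\<Sum>k=1..N. beta k * conj ft (y k)) - (\<Sum>k=1..N. beta k * inner xx (y k))
        - S * (conj ft yy + h zz + mu * nu xx)" .
    have E2: "(1 / S) * (S * (conj ft yy + h zz + mu * nu xx)) = conj ft yy + h zz + mu * nu xx"
      using Sp by simp
    show ?thesis unfolding E1 M_def using E2 by (simp only: right_diff_distrib distrib_left)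
  qed
  have OTS: "(1 / S) * (\<Sum>k=1..N. beta k * (I k / real (T k) + Yv k))
      \<le> (1 / S) * (beta 1 * (q 1 1 / real (T 1) * breg zeta zeta' (z 0) zz
         + (eta 1 1 / real (T 1) + p 1) * breg nu nu' (x 0) xx))"
    using OT Sp by (intro mult_left_mono) auto
  have muB1: "mu * nu xb \<le> mu * M (\<lambda>k t. nu (xin k t))" using B1 mu by (rule mult_left_mono)
  have gq: "gapQ A mu nu ft h xb yb zb xx yy zz = mu * nu xb + inner xb yy + inner (A xb) zz - conj ft yy - h zz
      - (mu * nu xx + inner xx yb + inner (A xx) zb - conj ft yb - h zb)"
    unfolding gapQ_def Lag_def by simp
  have "gapQ A mu nu ft h xb yb zb xx yy zz \<le> (1 / S) * (beta 1 * (q 1 1 / real (T 1) * breg zeta zeta' (z 0) zz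
         + (eta 1 1 / real (T 1) + p 1) * breg nu nu' (x 0) xx))"
    unfolding gq using muB1 B2 B3 B4 B5 B6 B7 EQ Mphi OTS by linarith
  then show "gapQ A mu nu ft h (wavg beta N (xhat T x xin)) (wavg beta N y) (wavg beta N (zhat T zin)) xx yy zz
           \<le> (1 / (\<Sum>k=1..N. beta k)) * beta 1 *
               (q 1 1 / real (T 1) * breg zeta zeta' (z 0) zz
                + (eta 1 1 / real (T 1) + p 1) * breg nu nu' (x 0) xx)"
    unfolding xb_def yb_def zb_def S_def by (simp add: mult.assoc)
qed

lemma part2:
  fixes X :: "'a::euclidean_space set" and Z :: "'b::euclidean_space set"
    and A :: "'a \<Rightarrow> 'b" and h :: "'b \<Rightarrow> real" and nz :: "'b \<Rightarrow> real"
    and ft :: "'a \<Rightarrow> real" and gft :: "'a \<Rightarrow> 'a"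
    and xb yb :: 'a and zb :: 'b and x0 :: 'a and z0 :: 'b and Bc c1 c2 d1 :: real
  assumes A: "linear A"
    and ft_cvx: "convex_on UNIV ft"
    and ft_grad: "\<And>u. (ft has_derivative (\<lambda>d. inner (gft u) d)) (at u)"
    and P1: "\<forall>xx\<in>X. \<forall>yy\<in>conj_dom ft. \<forall>zz\<in>Z.
           gapQ A mu nu ft h xb yb zb xx yy zz \<le> Bc * (c1 * breg zeta zeta' z0 zz + c2 * breg nu nu' x0 xx)"
    and xbX: "xb \<in> X" and ybD: "yb \<in> conj_dom ft"
    and Bc: "0 \<le> Bc" and c1: "0 \<le> c1" and c2: "0 \<le> c2"
    and sgx0: "is_subgrad_on nu X x0 (nu' x0)" and d1: "c1 = 2 * d1"
    and H: "Z = UNIV \<and> nz = norm \<and> (\<forall>a c. breg zeta zeta' a c = (norm (c - a))\<^sup>2 / 2)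
            \<and> (\<forall>v. h v = inner b v) \<and> z0 = 0
            \<and> xs \<in> X \<and> ys \<in> conj_dom ft \<and> zs \<in> Z
            \<and> (\<forall>xx\<in>X. \<forall>yy\<in>conj_dom ft. \<forall>zz\<in>Z.
                  Lag A mu nu ft h xs yy zz \<le> Lag A mu nu ft h xs ys zs
                \<and> Lag A mu nu ft h xs ys zs \<le> Lag A mu nu ft h xx ys zs)"
  shows "(ft xb + mu * nu xb - (ft xs + mu * nu xs) \<le> Bc * c2 * breg nu nu' x0 xs)
     \<and> norm (A xb - b) \<le> Bc * (d1 * (norm zs + 1)\<^sup>2 + c2 * breg nu nu' x0 xs)"
proof -
  have ZU: "Z = UNIV" and U: "\<And>a c. breg zeta zeta' a c = (norm (c - a))\<^sup>2 / 2"
    and hb: "\<And>v. h v = inner b v" and z0: "z0 = 0" and xs: "xs \<in> X" and ys: "ys \<in> conj_dom ft"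
    and sad1: "\<And>yy zz. yy \<in> conj_dom ft \<Longrightarrow> Lag A mu nu ft h xs yy zz \<le> Lag A mu nu ft h xs ys zs"
    and sad2: "\<And>xx. xx \<in> X \<Longrightarrow> Lag A mu nu ft h xs ys zs \<le> Lag A mu nu ft h xx ys zs"
    using H by auto
  have Axs: "A xs = b"
  proof (rule ccontr)
    assume ne: "A xs \<noteq> b"
    define d where "d = A xs - b"
    have dpos: "inner d d > 0" using ne unfolding d_def by simp
    have key: "m * inner d d \<le> inner d zs" for m
    proof -
      have "Lag A mu nu ft h xs ys (m *\<^sub>R d) \<le> Lag A mu nu ft h xs ys zs" by (rule sad1[OF ys])
      then show ?thesis unfolding Lag_def hb d_def by (simp add: inner_diff_left inner_diff_right algebra_simps)
    qed
    have "((\<bar>inner d zs\<bar> + 1) / inner d d) * inner d d \<le> inner d zs" by (rule key)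
    then show False using dpos by simp
  qed
  have fxs: "ft xs \<le> inner xs ys - conj ft ys"
  proof -
    have "Lag A mu nu ft h xs (gft xs) zs \<le> Lag A mu nu ft h xs ys zs"
      by (rule sad1[OF conj_grad(1)[OF ft_cvx ft_grad]])
    then show ?thesis using conj_grad(2)[OF ft_cvx ft_grad, of xs] unfolding Lag_def
      by (simp add: inner_commute)
  qed
  have fy: "inner xs yb - conj ft yb \<le> ft xs" using conj_le[OF ybD, of xs] by simp
  have gapge: "gapQ A mu nu ft h xb yb zb xs (gft xb) zz
      = ft xb + mu * nu xb + inner (A xb - b) zz - (mu * nu xs + inner xs yb - conj ft yb)" for zz
    unfolding gapQ_def Lag_def hb Axs using conj_grad(2)[OF ft_cvx ft_grad, of xb]
    by (simp add: inner_diff_left inner_diff_right inner_commute)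
  have gapb: "gapQ A mu nu ft h xb yb zb xs (gft xb) zz \<le> Bc * (c1 * ((norm zz)\<^sup>2 / 2) + c2 * breg nu nu' x0 xs)" for zz
    using P1 xs conj_grad(1)[OF ft_cvx ft_grad, of xb] ZU U z0 by auto
  have main: "ft xb + mu * nu xb - (ft xs + mu * nu xs) + inner (A xb - b) zz
      \<le> Bc * (c1 * ((norm zz)\<^sup>2 / 2) + c2 * breg nu nu' x0 xs)" for zz
    using gapb[of zz] gapge[of zz] fy by linarith
  have part_a: "ft xb + mu * nu xb - (ft xs + mu * nu xs) \<le> Bc * c2 * breg nu nu' x0 xs"
    using main[of 0] by (simp add: mult.assoc)
  have V0: "0 \<le> breg nu nu' x0 xs" by (rule breg_nonneg[where g' = nu', OF sgx0 xs])
  have lower: "ft xs + mu * nu xs \<le> ft xb + mu * nu xb + norm zs * norm (A xb - b)"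
  proof -
    have "Lag A mu nu ft h xs ys zs \<le> Lag A mu nu ft h xb ys zs" by (rule sad2[OF xbX])
    then have "mu * nu xs + (inner xs ys - conj ft ys) + inner (A xs - b) zs
        \<le> mu * nu xb + (inner xb ys - conj ft ys) + inner (A xb - b) zs"
      unfolding Lag_def hb by (simp add: inner_diff_left inner_diff_right inner_commute)
    moreover have "inner xb ys - conj ft ys \<le> ft xb" using conj_le[OF ys, of xb] by simp
    moreover have "inner (A xb - b) zs \<le> norm zs * norm (A xb - b)"
      using norm_cauchy_schwarz[of "A xb - b" zs] by (simp add: mult.commute)
    ultimately show ?thesis using fxs Axs by simp
  qed
  have part_b: "norm (A xb - b) \<le> Bc * (d1 * (norm zs + 1)\<^sup>2 + c2 * breg nu nu' x0 xs)"
  proof (cases "A xb - b = 0")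
    case True
    then show ?thesis using Bc c1 c2 V0 d1 by simp
  next
    case False
    define r where "r = norm (A xb - b)"
    have rp: "r > 0" using False unfolding r_def by simp
    define zz where "zz = ((norm zs + 1) / r) *\<^sub>R (A xb - b)"
    have nzz: "norm zz = norm zs + 1" unfolding zz_def r_def using rp r_def
      by (simp add: abs_of_nonneg)
    have izz: "inner (A xb - b) zz = (norm zs + 1) * r"
      unfolding zz_def r_def using rp r_def by (simp add: power2_norm_eq_inner[symmetric] power2_eq_square)
    have "ft xb + mu * nu xb - (ft xs + mu * nu xs) + (norm zs + 1) * r
        \<le> Bc * (c1 * ((norm zs + 1)\<^sup>2 / 2) + c2 * breg nu nu' x0 xs)"
      using main[of zz] nzz izz by simp
    then have "r \<le> Bc * (c1 * ((norm zs + 1)\<^sup>2 / 2) + c2 * breg nu nu' x0 xs)"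
      using lower unfolding r_def by (simp add: algebra_simps)
    then show ?thesis unfolding r_def d1 by simp
  qed
  show ?thesis using part_a part_b by simp
qed

theorem proposition4p1:
  fixes X :: "'a::euclidean_space set" and Z :: "'b::euclidean_space set"
    and nx :: "'a \<Rightarrow> real" and nz :: "'b \<Rightarrow> real"
    and A :: "'a \<Rightarrow> 'b" and h :: "'b \<Rightarrow> real"
    and mu :: real and nu :: "'a \<Rightarrow> real" and nu' :: "'a \<Rightarrow> 'a"
    and ft :: "'a \<Rightarrow> real" and gft :: "'a \<Rightarrow> 'a" and L :: real and fs' :: "'a \<Rightarrow> 'a"
    and zeta :: "'b \<Rightarrow> real" and zeta' :: "'b \<Rightarrow> 'b"
    and T :: "nat \<Rightarrow> nat" and beta p lam tau :: "nat \<Rightarrow> real"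
    and q eta alpha :: "nat \<Rightarrow> nat \<Rightarrow> real" and N :: nat
    and x y :: "nat \<Rightarrow> 'a" and z :: "nat \<Rightarrow> 'b"
    and xin :: "nat \<Rightarrow> nat \<Rightarrow> 'a" and zin :: "nat \<Rightarrow> nat \<Rightarrow> 'b"
  assumes X: "closed X" "convex X" "X \<noteq> {}"
    and Z: "closed Z" "convex Z" "Z \<noteq> {}"
    and norms: "is_norm nx" "is_norm nz"
    and A: "linear A"
    and h: "convex_on Z h"
    and mu: "0 \<le> mu"
    and nu: "strongly_convex_wrt 1 nx X nu"
    and ft_cvx: "convex_on UNIV ft"
    and ft_grad: "\<And>u. (ft has_derivative (\<lambda>d. inner (gft u) d)) (at u)"
    and ft_lip: "\<And>u v. dual_norm nx (gft u - gft v) \<le> L * nx (u - v)"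
    and zeta: "strongly_convex_wrt 1 nz Z zeta"
    and N: "1 \<le> N"
    and pos: "\<And>k. k \<in> {1..N} \<Longrightarrow> 0 < T k \<and> 0 < beta k \<and> 0 < p k \<and> 0 \<le> lam k \<and> 0 \<le> tau k"
    and pos_t: "\<And>k t. k \<in> {1..N} \<Longrightarrow> t \<in> {1..T k} \<Longrightarrow> 0 < q k t \<and> 0 < eta k t \<and> 0 \<le> alpha k t"
    and cond_i: "\<And>k. k \<in> {2..N} \<Longrightarrow>
         beta k * tau k \<le> beta (k - 1) * (tau (k - 1) + 1)
       \<and> beta (k - 1) = beta k * lam k
       \<and> L * lam k \<le> p (k - 1) * tau k
       \<and> beta k * real (T (k - 1)) * alpha k 1 = beta (k - 1) * real (T k)
       \<and> alpha k 1 * (op_norm nx nz A)\<^sup>2 \<le> eta (k - 1) (T (k - 1)) * q k 1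
       \<and> beta k * real (T (k - 1)) * q k 1 \<le> beta (k - 1) * real (T k) * q (k - 1) (T (k - 1))
       \<and> beta k * real (T (k - 1)) * (eta k 1 + p k * real (T k))
           \<le> beta (k - 1) * real (T k) * (mu + eta (k - 1) (T (k - 1)) + p (k - 1))"
    and cond_ii: "\<And>k t. k \<in> {1..N} \<Longrightarrow> t \<in> {2..T k} \<Longrightarrow>
         alpha k t = 1
       \<and> (op_norm nx nz A)\<^sup>2 \<le> eta k (t - 1) * q k t
       \<and> q k t \<le> q k (t - 1)
       \<and> eta k t \<le> mu + eta k (t - 1) + p k"
    and cond_iii: "tau 1 = 0" "L \<le> p N * (tau N + 1)" "(op_norm nx nz A)\<^sup>2 \<le> eta N (T N) * q N (T N)"
    and init: "x 0 \<in> X" "y 0 \<in> conj_dom ft" "z 0 \<in> Z"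
    and alg: "pds_spp X Z A mu nu nu' ft fs' h zeta zeta' T lam tau alpha q eta p N x y z xin zin"
    and sg: "pds_subgrad_convention X Z A mu nu nu' ft fs' h zeta zeta' T lam tau alpha q eta p N x y z xin zin"
  shows "(\<forall>xx\<in>X. \<forall>yy\<in>conj_dom ft. \<forall>zz\<in>Z.
           gapQ A mu nu ft h (wavg beta N (xhat T x xin)) (wavg beta N y) (wavg beta N (zhat T zin)) xx yy zz
           \<le> (1 / (\<Sum>k=1..N. beta k)) * beta 1 *
               (q 1 1 / real (T 1) * breg zeta zeta' (z 0) zz
                + (eta 1 1 / real (T 1) + p 1) * breg nu nu' (x 0) xx))
       \<and> (\<forall>b xs ys zs.
           (Z = UNIV \<and> nz = norm \<and> (\<forall>a c. breg zeta zeta' a c = (norm (c - a))\<^sup>2 / 2)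
            \<and> (\<forall>v. h v = inner b v) \<and> z 0 = 0
            \<and> xs \<in> X \<and> ys \<in> conj_dom ft \<and> zs \<in> Z
            \<and> (\<forall>xx\<in>X. \<forall>yy\<in>conj_dom ft. \<forall>zz\<in>Z.
                  Lag A mu nu ft h xs yy zz \<le> Lag A mu nu ft h xs ys zs
                \<and> Lag A mu nu ft h xs ys zs \<le> Lag A mu nu ft h xx ys zs))
           \<longrightarrow> (ft (wavg beta N (xhat T x xin)) + mu * nu (wavg beta N (xhat T x xin)) - (ft xs + mu * nu xs)
                  \<le> (1 / (\<Sum>k=1..N. beta k)) * beta 1 * (eta 1 1 / real (T 1) + p 1) * breg nu nu' (x 0) xs)
             \<and> norm (A (wavg beta N (xhat T x xin)) - b)
                  \<le> (1 / (\<Sum>k=1..N. beta k)) * beta 1 *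
                      (q 1 1 / (2 * real (T 1)) * (norm zs + 1)\<^sup>2
                       + (eta 1 1 / real (T 1) + p 1) * breg nu nu' (x 0) xs))"
proof -
  have P1: "\<forall>xx\<in>X. \<forall>yy\<in>conj_dom ft. \<forall>zz\<in>Z.
           gapQ A mu nu ft h (wavg beta N (xhat T x xin)) (wavg beta N y) (wavg beta N (zhat T zin)) xx yy zz
           \<le> (1 / (\<Sum>k=1..N. beta k)) * beta 1 *
               (q 1 1 / real (T 1) * breg zeta zeta' (z 0) zz
                + (eta 1 1 / real (T 1) + p 1) * breg nu nu' (x 0) xx)"
    by (rule part1[OF X Z norms A h mu nu ft_cvx ft_grad ft_lip zeta N pos pos_t cond_i cond_ii cond_iii init alg sg])
  have cnu: "convex_on X nu" by (rule sc_convex[OF X(2) nu norms(1)])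
  have bp: "\<And>k. k \<in> {1..N} \<Longrightarrow> 0 < beta k" using pos by blast
  have N1: "(1::nat) \<in> {1..N}" using N by simp
  have xinX: "xin k t \<in> X" if "k \<in> {1..N}" "t \<in> {1..T k}" for k t
    using alg that unfolding pds_spp_def is_argmin_on_def by blast
  have yk_dom: "y k \<in> conj_dom ft" if "k \<in> {1..N}" for k
    using alg that unfolding pds_spp_def is_argmin_on_def by blast
  have xhX: "xhat T x xin k \<in> X" if k: "k \<in> {1..N}" for k
  proof -
    have "1 \<le> T k" using pos[OF k] by simp
    then have "(1 / real (T k)) *\<^sub>R (\<Sum>t=1..T k. xin k t) \<in> X"
      by (rule tavg_convex(1)[OF cnu X(2)]) (use xinX[OF k] in auto)
    then show ?thesis using k unfolding xhat_def by simp
  qed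
  have xbX: "wavg beta N (xhat T x xin) \<in> X" by (rule wavg_convex(1)[OF cnu X(2) N xhX bp])
  have ybD: "wavg beta N y \<in> conj_dom ft"
    by (rule wavg_convex(1)[OF conj_convex(2) conj_convex(1) N yk_dom bp])
  have Sp: "0 < (\<Sum>k=1..N. beta k)" using N bp by (intro sum_pos) auto
  have Bc: "0 \<le> (1 / (\<Sum>k=1..N. beta k)) * beta 1" using Sp bp[OF N1] by simp
  have T1: "0 < T 1" using pos[OF N1] by simp
  have c1: "0 \<le> q 1 1 / real (T 1)" using pos_t[OF N1, of 1] T1 by simp
  have c2: "0 \<le> eta 1 1 / real (T 1) + p 1" using pos_t[OF N1, of 1] pos[OF N1] T1 by simp
  have d1: "q 1 1 / real (T 1) = 2 * (q 1 1 / (2 * real (T 1)))" by simp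
  have sgx0: "is_subgrad_on nu X (x 0) (nu' (x 0))"
    using sg unfolding pds_subgrad_convention_def by blast
  note P2 = part2[OF A ft_cvx ft_grad P1 xbX ybD Bc c1 c2 sgx0 d1]
  show ?thesis using P1 P2 by blast
qed

end
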